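(* Let $m\ge1$, $\vec s=(s_1,\dots,s_m)$ with $s_j\in[1,\infty)$, $\vec q=(q_1,\dots,q_m)$, $\vec r=(r_1,\dots,r_m)$ with $q_j,r_j\in(s_j,\infty)$, $\frac1q=\sum_j\frac1{q_j}<1$, $\frac1r=\sum_j\frac1{r_j}<1$, $\frac1s=\sum_j\frac1{s_j}$. Let $\vec v=(v_1,\dots,v_m)\in\prod_{j=1}^mA_{q_j/s_j}(\mathbb{R}^d)$ and $\vec w=(w_1,\dots,w_m)\in\prod_{j=1}^mA_{r_j/s_j}(\mathbb{R}^d)$. Then there exist $\vec p=(p_1,\dots,p_m)$ with $p_j\in(s_j,\infty)$ and $\frac1p=\sum_j\frac1{p_j}<1$, $\vec u=(u_1,\dots,u_m)\in\prod_{j=1}^mA_{p_j/s_j}(\mathbb{R}^d)$ and $\theta\in(0,1)$ such that $$\frac1{r_j}=\frac{1-\theta}{p_j}+\frac\theta{q_j},\qquad w_j^{1/r_j}=u_j^{(1-\theta)/p_j}v_j^{\theta/q_j},\qquad j=1,\dots,m,$$ and $$\frac1r=\frac{1-\theta}p+\frac\theta q,\qquad \nu_{\vec w,\vec r}^{1/r}=\nu_{\vec u,\vec p}^{(1-\theta)/p}\nu_{\vec v,\vec q}^{\theta/q}.$$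
   Context: For $1<t<\infty$, $w\in A_t(\mathbb{R}^d)$ means $\sup_Q\langle w\rangle_Q\langle w^{-1/(t-1)}\rangle_Q^{t-1}<\infty$ over cubes $Q\subset\mathbb{R}^d$, with $\langle f\rangle_Q=|Q|^{-1}\int_Qf$; $A_{q_j/s_j}$ denotes $A_t$ with $t=q_j/s_j$. For $\vec p$ with $\frac1p=\sum_j\frac1{p_j}$ and weights $\vec w$, $\nu_{\vec w,\vec p}=\prod_jw_j^{p/p_j}$. *)

theory Defs
  imports "HOL-Analysis.Analysis"
begin

definition cube :: "'a::euclidean_space \<Rightarrow> real \<Rightarrow> 'a set" where
  "cube a h = cbox a (a + h *\<^sub>R One)"

definition avg :: "'a::euclidean_space set \<Rightarrow> ('a \<Rightarrow> real) \<Rightarrow> real" where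
  "avg Q f = enn2real (\<integral>\<^sup>+ x\<in>Q. ennreal (f x) \<partial>lebesgue) / measure lebesgue Q"

definition A_weight :: "real \<Rightarrow> ('a::euclidean_space \<Rightarrow> real) \<Rightarrow> bool" where
  "A_weight t w \<longleftrightarrow>
     w \<in> borel_measurable lebesgue \<and> (\<forall>x. 0 \<le> w x) \<and> (AE x in lebesgue. 0 < w x) \<and>
     (\<forall>a h. h > 0 \<longrightarrow>
        (\<integral>\<^sup>+ x\<in>cube a h. ennreal (w x) \<partial>lebesgue) \<noteq> \<infinity> \<and>
        (\<integral>\<^sup>+ x\<in>cube a h. ennreal (w x powr (-1/(t-1))) \<partial>lebesgue) \<noteq> \<infinity>) \<and>
     (\<exists>C. \<forall>a h. h > 0 \<longrightarrow>
        avg (cube a h) w * avg (cube a h) (\<lambda>x. w x powr (-1/(t-1))) powr (t-1) \<le> C)"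

definition expo :: "nat \<Rightarrow> (nat \<Rightarrow> real) \<Rightarrow> real" where
  "expo m p = 1 / (\<Sum>j<m. 1 / p j)"

definition nu :: "nat \<Rightarrow> (nat \<Rightarrow> 'a \<Rightarrow> real) \<Rightarrow> (nat \<Rightarrow> real) \<Rightarrow> 'a \<Rightarrow> real" where
  "nu m w p x = (\<Prod>j<m. w j x powr (expo m p / p j))"

end

theory Submission
  imports Defs
begin

definition child :: "'a::euclidean_space \<Rightarrow> real \<Rightarrow> 'a set \<Rightarrow> 'a" where
  "child a h S = a + (h/2) *\<^sub>R (\<Sum>i\<in>S. i)"

lemma inner_sum_Basis:
  fixes S :: "'a::euclidean_space set"
  assumes "S \<subseteq> Basis" "i \<in> Basis"
  shows "(\<Sum>j\<in>S. j) \<bullet> i = (if i \<in> S then 1 else 0)"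
proof -
  have fS: "finite S" using assms(1) finite_Basis finite_subset by blast
  have "(\<Sum>j\<in>S. j) \<bullet> i = (\<Sum>j\<in>S. j \<bullet> i)" by (simp add: inner_sum_left)
  also have "\<dots> = (\<Sum>j\<in>S. if j = i then 1 else 0)"
    by (rule sum.cong) (use assms in \<open>auto simp: inner_Basis\<close>)
  also have "\<dots> = (if i \<in> S then 1 else 0)" using fS by (simp add: sum.delta)
  finally show ?thesis .
qed

lemma inner_child:
  assumes "S \<subseteq> Basis" "i \<in> Basis"
  shows "child a h S \<bullet> i = a \<bullet> i + (if i \<in> S then h/2 else 0)"
  using inner_sum_Basis[OF assms] by (simp add: child_def inner_add_left)

lemma mem_cube: "x \<in> cube a h \<longleftrightarrow> (\<forall>i\<in>Basis. a \<bullet> i \<le> x \<bullet> i \<and> x \<bullet> i \<le> a \<bullet> i + h)"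
  by (auto simp: cube_def mem_box inner_add_left)

lemma cube_sets [measurable]: "cube a h \<in> sets lebesgue"
  by (simp add: cube_def)

lemma closed_cube: "closed (cube a h)" by (simp add: cube_def closed_cbox)

lemma emeasure_cube:
  fixes a :: "'a::euclidean_space"
  assumes "0 \<le> h"
  shows "emeasure lebesgue (cube a h) = ennreal (h ^ DIM('a))"
proof -
  have "emeasure lebesgue (cube a h) = emeasure lborel (cube a h)"
    by (simp add: cube_def)
  also have "\<dots> = ennreal (\<Prod>b\<in>(Basis::'a set). h)"
    using assms by (simp add: cube_def emeasure_lborel_cbox_eq inner_add_left)
  also have "\<dots> = ennreal (h ^ DIM('a))" by simp
  finally show ?thesis .
qed

lemma measure_cube:
  fixes a :: "'a::euclidean_space"
  assumes "0 \<le> h"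
  shows "measure lebesgue (cube a h) = h ^ DIM('a)"
  unfolding measure_def emeasure_cube[OF assms] using assms by simp

lemma cube_children:
  assumes "0 \<le> h"
  shows "cube a h = (\<Union>S\<in>Pow Basis. cube (child a h S) (h/2))"
proof
  show "cube a h \<subseteq> (\<Union>S\<in>Pow Basis. cube (child a h S) (h/2))"
  proof
    fix x assume x: "x \<in> cube a h"
    define S where "S = {i\<in>Basis. a \<bullet> i + h/2 \<le> x \<bullet> i}"
    have "S \<in> Pow Basis" by (auto simp: S_def)
    moreover have "x \<in> cube (child a h S) (h/2)"
      using x unfolding mem_cube
      by (auto simp: inner_child S_def)
    ultimately show "x \<in> (\<Union>S\<in>Pow Basis. cube (child a h S) (h/2))" by blast
  qed
next
  show "(\<Union>S\<in>Pow Basis. cube (child a h S) (h/2)) \<subseteq> cube a h"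
    using assms by (auto simp: mem_cube inner_child split: if_splits; fastforce)
qed

lemma child_sub:
  assumes "0 \<le> h" "S \<subseteq> Basis"
  shows "cube (child a h S) (h/2) \<subseteq> cube a h"
  using cube_children[OF assms(1), of a] assms(2) by blast

lemma children_overlap:
  assumes "S \<subseteq> Basis" "T \<subseteq> Basis" "S \<noteq> T"
    and "x \<in> cube (child a h S) (h/2)" "x \<in> cube (child a h T) (h/2)"
  shows "\<exists>i\<in>Basis. x \<bullet> i = a \<bullet> i + h/2"
proof -
  obtain i where i: "i \<in> S \<and> i \<notin> T \<or> i \<in> T \<and> i \<notin> S" using assms(3) by blast
  then have iB: "i \<in> Basis" using assms(1,2) by blast
  have 1: "child a h S \<bullet> i \<le> x \<bullet> i \<and> x \<bullet> i \<le> child a h S \<bullet> i + h/2"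
    using assms(4) iB by (simp add: mem_cube)
  have 2: "child a h T \<bullet> i \<le> x \<bullet> i \<and> x \<bullet> i \<le> child a h T \<bullet> i + h/2"
    using assms(5) iB by (simp add: mem_cube)
  show ?thesis using 1 2 i iB assms(1,2)
    by (intro bexI[of _ i]) (auto simp: inner_child)
qed

lemma nn_integral_children:
  fixes f :: "'a::euclidean_space \<Rightarrow> ennreal"
  assumes f: "f \<in> borel_measurable lebesgue"
    and X: "\<And>S. S \<subseteq> Basis \<Longrightarrow> X S \<in> sets lebesgue \<and> X S \<subseteq> cube (child a h S) (h/2)"
  shows "(\<integral>\<^sup>+x\<in>(\<Union>S\<in>Pow Basis. X S). f x \<partial>lebesgue) = (\<Sum>S\<in>Pow Basis. \<integral>\<^sup>+x\<in>X S. f x \<partial>lebesgue)"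
proof -
  define N where "N = (\<Union>i\<in>Basis. {x::'a. i \<bullet> x = a \<bullet> i + h/2})"
  have "negligible N" unfolding N_def
    by (rule negligible_Union) (auto intro!: negligible_hyperplane simp: nonzero_Basis)
  then have "N \<in> null_sets lebesgue" by (simp add: negligible_iff_null_sets)
  then have ae: "AE x in lebesgue. x \<notin> N" by (rule AE_not_in)
  have "AE x in lebesgue. f x * indicator (\<Union>S\<in>Pow Basis. X S) x = (\<Sum>S\<in>Pow Basis. f x * indicator (X S) x)"
    using ae
  proof eventually_elim
    case (elim x)
    show ?case
    proof (cases "\<exists>S\<in>Pow Basis. x \<in> X S")
      case True
      then obtain S where S: "S \<subseteq> Basis" "x \<in> X S" by auto
      have uniq: "T \<subseteq> Basis \<Longrightarrow> x \<in> X T \<Longrightarrow> T = S" for T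
      proof (rule ccontr)
        assume T: "T \<subseteq> Basis" "x \<in> X T" "T \<noteq> S"
        then obtain i where "i \<in> Basis" "x \<bullet> i = a \<bullet> i + h/2"
          using children_overlap[of T S x a h] X S by blast
        then show False using elim by (auto simp: N_def inner_commute)
      qed
      have "(\<Sum>T\<in>Pow Basis. f x * indicator (X T) x) = f x * indicator (X S) x + (\<Sum>T\<in>Pow Basis - {S}. f x * indicator (X T) x)"
        by (rule sum.remove) (use S in auto)
      also have "(\<Sum>T\<in>Pow Basis - {S}. f x * indicator (X T) x) = 0"
        by (rule sum.neutral) (use uniq in \<open>auto simp: indicator_def\<close>)
      finally have "(\<Sum>T\<in>Pow Basis. f x * indicator (X T) x) = f x * indicator (X S) x" by simp
      moreover have "indicator (\<Union>S\<in>Pow Basis. X S) x = (1::ennreal)" using S by (auto simp: indicator_def)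
      ultimately show ?thesis using S by (simp add: indicator_def)
    next
      case False
      then show ?thesis by (auto simp: indicator_def)
    qed
  qed
  then have "(\<integral>\<^sup>+x\<in>(\<Union>S\<in>Pow Basis. X S). f x \<partial>lebesgue) = (\<integral>\<^sup>+x. (\<Sum>S\<in>Pow Basis. f x * indicator (X S) x) \<partial>lebesgue)"
    by (rule nn_integral_cong_AE)
  also have "\<dots> = (\<Sum>S\<in>Pow Basis. \<integral>\<^sup>+x\<in>X S. f x \<partial>lebesgue)"
    by (rule nn_integral_sum) (use f X in \<open>auto intro!: borel_measurable_times_ennreal borel_measurable_indicator\<close>)
  finally show ?thesis .
qed

lemma holder_nn:
  fixes f g :: "'b \<Rightarrow> real"
  assumes f[measurable]: "f \<in> borel_measurable M" and g[measurable]: "g \<in> borel_measurable M"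
    and fnn: "\<And>x. 0 \<le> f x" and gnn: "\<And>x. 0 \<le> g x"
    and p: "1 < p" and q: "q = p/(p-1)"
    and A: "(\<integral>\<^sup>+x. ennreal (f x powr p) \<partial>M) = ennreal A" "0 \<le> A"
    and B: "(\<integral>\<^sup>+x. ennreal (g x powr q) \<partial>M) = ennreal B" "0 \<le> B"
  shows "(\<integral>\<^sup>+x. ennreal (f x * g x) \<partial>M) \<le> ennreal (A powr (1/p) * B powr (1/q))"
proof -
  have q1: "1 < q" using p unfolding q by (subst less_divide_eq_1_pos) auto
  have pq: "1/p + 1/q = 1" using p unfolding q by (simp add: field_simps)
  show ?thesis
  proof (cases "A = 0 \<or> B = 0")
    case True
    then show ?thesis
    proof
      assume "A = 0"
      then have "AE x in M. ennreal (f x powr p) = 0"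
        using A by (subst nn_integral_0_iff_AE[symmetric]) auto
      then have "AE x in M. ennreal (f x * g x) = 0"
        by eventually_elim (use fnn in auto)
      then have "(\<integral>\<^sup>+x. ennreal (f x * g x) \<partial>M) = 0"
        by (subst nn_integral_0_iff_AE) auto
      then show ?thesis by simp
    next
      assume "B = 0"
      then have "AE x in M. ennreal (g x powr q) = 0"
        using B by (subst nn_integral_0_iff_AE[symmetric]) auto
      then have "AE x in M. ennreal (f x * g x) = 0"
        by eventually_elim (use gnn in auto)
      then have "(\<integral>\<^sup>+x. ennreal (f x * g x) \<partial>M) = 0"
        by (subst nn_integral_0_iff_AE) auto
      then show ?thesis by simp
    qed
  next
    case False
    then have Apos: "0 < A" and Bpos: "0 < B" using A B by auto
    define \<alpha> where "\<alpha> = A powr (1/p)"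
    define \<beta> where "\<beta> = B powr (1/q)"
    have \<alpha>pos: "0 < \<alpha>" and \<beta>pos: "0 < \<beta>" using Apos Bpos by (auto simp: \<alpha>_def \<beta>_def)
    have \<alpha>p: "\<alpha> powr p = A" using Apos p by (simp add: \<alpha>_def powr_powr)
    have \<beta>q: "\<beta> powr q = B" using Bpos q1 by (simp add: \<beta>_def powr_powr)
    define c1 where "c1 = \<alpha> * \<beta> / (p * A)"
    define c2 where "c2 = \<alpha> * \<beta> / (q * B)"
    have c1: "0 \<le> c1" and c2: "0 \<le> c2" using \<alpha>pos \<beta>pos Apos Bpos p q1 by (auto simp: c1_def c2_def)
    have pt: "f x * g x \<le> c1 * f x powr p + c2 * g x powr q" for x
    proof -
      have "(f x / \<alpha>) * (g x / \<beta>) \<le> (f x / \<alpha>) powr p / p + (g x / \<beta>) powr q / q"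
        by (rule Youngs_inequality[OF p q1 pq]) (use fnn gnn \<alpha>pos \<beta>pos in auto)
      also have "\<dots> = f x powr p / (p * A) + g x powr q / (q * B)"
        by (simp add: powr_divide \<alpha>p \<beta>q mult.commute)
      finally have "(f x / \<alpha>) * (g x / \<beta>) \<le> f x powr p / (p * A) + g x powr q / (q * B)" .
      then have "\<alpha> * \<beta> * ((f x / \<alpha>) * (g x / \<beta>)) \<le> \<alpha> * \<beta> * (f x powr p / (p * A) + g x powr q / (q * B))"
        using \<alpha>pos \<beta>pos by (intro mult_left_mono) auto
      then show ?thesis using \<alpha>pos \<beta>pos by (simp add: c1_def c2_def field_simps)
    qed
    have "(\<integral>\<^sup>+x. ennreal (f x * g x) \<partial>M) \<le> (\<integral>\<^sup>+x. ennreal c1 * ennreal (f x powr p) + ennreal c2 * ennreal (g x powr q) \<partial>M)"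
    proof (rule nn_integral_mono)
      fix x
      have "ennreal (f x * g x) \<le> ennreal (c1 * f x powr p + c2 * g x powr q)"
        using pt by (rule ennreal_leI)
      also have "\<dots> = ennreal c1 * ennreal (f x powr p) + ennreal c2 * ennreal (g x powr q)"
        using c1 c2 by (simp add: ennreal_mult)
      finally show "ennreal (f x * g x) \<le> ennreal c1 * ennreal (f x powr p) + ennreal c2 * ennreal (g x powr q)" .
    qed
    also have "\<dots> = ennreal c1 * ennreal A + ennreal c2 * ennreal B"
      by (subst nn_integral_add) (auto simp: nn_integral_cmult A B)
    also have "\<dots> = ennreal (c1 * A + c2 * B)"
      using c1 c2 A B by (simp add: ennreal_mult)
    also have "c1 * A + c2 * B = \<alpha> * \<beta> * (1/p + 1/q)"
      using Apos Bpos p q1 by (simp add: c1_def c2_def field_simps)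
    also have "\<dots> = A powr (1/p) * B powr (1/q)" using pq by (simp add: \<alpha>_def \<beta>_def)
    finally show ?thesis .
  qed
qed

lemma holder_set:
  fixes f g :: "'a \<Rightarrow> real"
  assumes f[measurable]: "f \<in> borel_measurable M" and g[measurable]: "g \<in> borel_measurable M"
    and fnn: "\<And>x. 0 \<le> f x" and gnn: "\<And>x. 0 \<le> g x"
    and E[measurable]: "E \<in> sets M"
    and p: "1 < p" and q: "q = p/(p-1)"
    and A: "(\<integral>\<^sup>+x\<in>E. ennreal (f x powr p) \<partial>M) = ennreal A" "0 \<le> A"
    and B: "(\<integral>\<^sup>+x\<in>E. ennreal (g x powr q) \<partial>M) = ennreal B" "0 \<le> B"
  shows "(\<integral>\<^sup>+x\<in>E. ennreal (f x * g x) \<partial>M) \<le> ennreal (A powr (1/p) * B powr (1/q))"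
proof -
  have q1: "1 < q" using p unfolding q by (subst less_divide_eq_1_pos) auto
  have e1: "ennreal ((f x * indicator E x) powr p) = ennreal (f x powr p) * indicator E x" for x
    using p by (auto simp: indicator_def)
  have e2: "ennreal ((g x * indicator E x) powr q) = ennreal (g x powr q) * indicator E x" for x
    using q1 by (auto simp: indicator_def)
  have e3: "ennreal ((f x * indicator E x) * (g x * indicator E x)) = ennreal (f x * g x) * indicator E x" for x
    by (auto simp: indicator_def)
  have "(\<integral>\<^sup>+x. ennreal ((f x * indicator E x) * (g x * indicator E x)) \<partial>M) \<le> ennreal (A powr (1/p) * B powr (1/q))"
    by (rule holder_nn[OF _ _ _ _ p q]) (use fnn gnn A B in \<open>auto simp: e1 e2\<close>)
  then show ?thesis by (simp add: e3)
qed

lemma jensen_set: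
  fixes f :: "'a \<Rightarrow> real"
  assumes f[measurable]: "f \<in> borel_measurable M" and fnn: "\<And>x. 0 \<le> f x"
    and E[measurable]: "E \<in> sets M"
    and \<gamma>: "0 < \<gamma>" "\<gamma> < 1"
    and F: "(\<integral>\<^sup>+x\<in>E. ennreal (f x) \<partial>M) = ennreal F" "0 \<le> F"
    and L: "emeasure M E = ennreal L" "0 \<le> L"
  shows "(\<integral>\<^sup>+x\<in>E. ennreal (f x powr \<gamma>) \<partial>M) \<le> ennreal (F powr \<gamma> * L powr (1 - \<gamma>))"
proof -
  define p where "p = 1/\<gamma>"
  define q where "q = p/(p-1)"
  have p: "1 < p" using \<gamma> by (simp add: p_def)
  have q: "q = 1/(1-\<gamma>)" using \<gamma> by (simp add: q_def p_def field_simps)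
  have a: "(\<integral>\<^sup>+x\<in>E. ennreal ((f x powr \<gamma>) powr p) \<partial>M) = ennreal F"
    using \<gamma> fnn by (simp add: powr_powr p_def F)
  have b: "(\<integral>\<^sup>+x\<in>E. ennreal (1 powr q) \<partial>M) = ennreal L"
    using L by simp
  have "(\<integral>\<^sup>+x\<in>E. ennreal (f x powr \<gamma> * 1) \<partial>M) \<le> ennreal (F powr (1/p) * L powr (1/q))"
    by (rule holder_set[OF _ _ _ _ E p q_def a F(2) b L(2)]) auto
  then show ?thesis using \<gamma> by (simp add: p_def q)
qed

lemma fin_real:
  fixes x :: ennreal
  assumes "x \<noteq> \<infinity>"
  obtains r where "x = ennreal r" "0 \<le> r"
  using assms that by (cases x rule: ennreal_cases) auto

lemma ennreal_le_fin:
  assumes "x \<le> ennreal r" "0 \<le> r"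
  obtains s where "x = ennreal s" "0 \<le> s" "s \<le> r"
proof -
  have "x \<noteq> \<infinity>" using assms(1) by (auto simp: top_unique)
  then obtain s where s: "x = ennreal s" "0 \<le> s" by (rule fin_real)
  then have "s \<le> r" using assms by simp
  then show ?thesis using that s by blast
qed

lemma set_nn_integral_mono_set:
  fixes f :: "'a \<Rightarrow> ennreal"
  assumes "A \<subseteq> B"
  shows "(\<integral>\<^sup>+x\<in>A. f x \<partial>M) \<le> (\<integral>\<^sup>+x\<in>B. f x \<partial>M)"
  by (rule nn_integral_mono) (use assms in \<open>auto simp: indicator_def\<close>)

lemma set_nn_integral_split:
  fixes f :: "'a \<Rightarrow> ennreal"
  assumes [measurable]: "f \<in> borel_measurable M" "A \<in> sets M" "B \<in> sets M" and "A \<inter> B = {}"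
  shows "(\<integral>\<^sup>+x\<in>A \<union> B. f x \<partial>M) = (\<integral>\<^sup>+x\<in>A. f x \<partial>M) + (\<integral>\<^sup>+x\<in>B. f x \<partial>M)"
proof -
  have "(\<integral>\<^sup>+x\<in>A \<union> B. f x \<partial>M) = (\<integral>\<^sup>+x. f x * indicator A x + f x * indicator B x \<partial>M)"
    using assms(4) by (intro nn_integral_cong) (auto simp: indicator_def)
  also have "\<dots> = (\<integral>\<^sup>+x\<in>A. f x \<partial>M) + (\<integral>\<^sup>+x\<in>B. f x \<partial>M)"
    by (rule nn_integral_add) auto
  finally show ?thesis .
qed

lemma A_weightD:
  assumes "A_weight t w"
  shows "w \<in> borel_measurable lebesgue" "\<And>x. 0 \<le> w x" "AE x in lebesgue. 0 < w x"
    "\<And>a h. 0 < h \<Longrightarrow> (\<integral>\<^sup>+ x\<in>cube a h. ennreal (w x) \<partial>lebesgue) \<noteq> \<infinity>"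
    "\<And>a h. 0 < h \<Longrightarrow> (\<integral>\<^sup>+ x\<in>cube a h. ennreal (w x powr (-1/(t-1))) \<partial>lebesgue) \<noteq> \<infinity>"
    "\<exists>C. \<forall>a h. h > 0 \<longrightarrow>
        avg (cube a h) w * avg (cube a h) (\<lambda>x. w x powr (-1/(t-1))) powr (t-1) \<le> C"
  using assms unfolding A_weight_def by auto

lemma avg_cube:
  fixes a :: "'a::euclidean_space"
  assumes "0 < h" "(\<integral>\<^sup>+ x\<in>cube a h. ennreal (f x) \<partial>lebesgue) = ennreal F" "0 \<le> F"
  shows "avg (cube a h) f = F / h ^ DIM('a)"
  using assms by (simp add: avg_def measure_cube)

lemma Ainf_half:
  fixes w :: "'a::euclidean_space \<Rightarrow> real"
  assumes Aw: "A_weight t w" and t: "1 < t"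
  obtains \<beta> where "0 < \<beta>" "\<beta> < 1"
    "\<And>c l F. 0 < l \<Longrightarrow> F \<in> sets lebesgue \<Longrightarrow> F \<subseteq> cube c l \<Longrightarrow>
       emeasure lebesgue F \<le> ennreal (l ^ DIM('a) / 2) \<Longrightarrow>
       (\<integral>\<^sup>+x\<in>F. ennreal (w x) \<partial>lebesgue) \<le> ennreal (1 - \<beta>) * (\<integral>\<^sup>+x\<in>cube c l. ennreal (w x) \<partial>lebesgue)"
proof -
  note wm[measurable] = A_weightD(1)[OF Aw]
  note wnn = A_weightD(2)[OF Aw]
  note wpos = A_weightD(3)[OF Aw]
  obtain C where C: "\<And>a h. h > 0 \<Longrightarrow>
        avg (cube a h) w * avg (cube a h) (\<lambda>x. w x powr (-1/(t-1))) powr (t-1) \<le> C"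
    using A_weightD(6)[OF Aw] by blast
  define C' where "C' = max C 1"
  define \<beta> where "\<beta> = 2 powr (-t) / C'"
  have C'1: "1 \<le> C'" by (simp add: C'_def)
  have \<beta>pos: "0 < \<beta>" using C'1 by (simp add: \<beta>_def)
  have "2 powr (-t) < 1" using t by (simp add: powr_minus_divide)
  then have \<beta>1: "\<beta> < 1" using C'1 unfolding \<beta>_def
    by (simp add: divide_less_eq)
  define D where "D = DIM('a)"
  define \<sigma> where "\<sigma> x = w x powr (-1/(t-1))" for x
  have \<sigma>m[measurable]: "\<sigma> \<in> borel_measurable lebesgue" unfolding \<sigma>_def by measurable
  show ?thesis
  proof (rule that[OF \<beta>pos \<beta>1])
    fix c :: 'a and l F
    assume l: "0 < l" and Fm[measurable]: "F \<in> sets lebesgue" and FR: "F \<subseteq> cube c l"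
      and Fmeas: "emeasure lebesgue F \<le> ennreal (l ^ DIM('a) / 2)"
    define R where "R = cube c l"
    define E where "E = R - F"
    define L where "L = l ^ D"
    have Lpos: "0 < L" using l by (simp add: L_def)
    have Rm[measurable]: "R \<in> sets lebesgue" by (simp add: R_def)
    have Em[measurable]: "E \<in> sets lebesgue" by (simp add: E_def)
    have ER: "E \<subseteq> R" by (auto simp: E_def)
    obtain wR where wR: "(\<integral>\<^sup>+x\<in>R. ennreal (w x) \<partial>lebesgue) = ennreal wR" "0 \<le> wR"
      using A_weightD(4)[OF Aw l, of c] unfolding R_def by (rule fin_real)
    obtain sR where sR: "(\<integral>\<^sup>+x\<in>R. ennreal (\<sigma> x) \<partial>lebesgue) = ennreal sR" "0 \<le> sR"
      using A_weightD(5)[OF Aw l, of c] unfolding R_def \<sigma>_def by (rule fin_real)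
    have "(\<integral>\<^sup>+x\<in>E. ennreal (w x) \<partial>lebesgue) \<le> ennreal wR"
      using set_nn_integral_mono_set[OF ER] wR by metis
    then obtain wE where wE: "(\<integral>\<^sup>+x\<in>E. ennreal (w x) \<partial>lebesgue) = ennreal wE" "0 \<le> wE" "wE \<le> wR"
      using wR(2) by (rule ennreal_le_fin)
    have "(\<integral>\<^sup>+x\<in>E. ennreal (\<sigma> x) \<partial>lebesgue) \<le> ennreal sR"
      using set_nn_integral_mono_set[OF ER] sR by metis
    then obtain sE where sE: "(\<integral>\<^sup>+x\<in>E. ennreal (\<sigma> x) \<partial>lebesgue) = ennreal sE" "0 \<le> sE" "sE \<le> sR"
      using sR(2) by (rule ennreal_le_fin)
    have emR: "emeasure lebesgue R = ennreal L" unfolding R_def L_def D_def by (rule emeasure_cube) (use l in simp)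
    have FR': "F \<subseteq> R" using FR by (simp add: R_def)
    have "emeasure lebesgue E = emeasure lebesgue R - emeasure lebesgue F"
      unfolding E_def by (rule emeasure_Diff) (use Fmeas FR' in \<open>auto simp: top_unique\<close>)
    moreover obtain mF where mF: "emeasure lebesgue F = ennreal mF" "0 \<le> mF" "mF \<le> L / 2"
      using Fmeas by (rule ennreal_le_fin) (use Lpos in \<open>simp add: L_def D_def\<close>)+
    ultimately have emE: "emeasure lebesgue E = ennreal (L - mF)"
      using emR mF by (simp add: ennreal_minus)
    have mE: "L / 2 \<le> L - mF" using mF by simp
    have "(\<integral>\<^sup>+x\<in>E. ennreal (w x powr (1/t) * w x powr (-1/t)) \<partial>lebesgue)
          \<le> ennreal (wE powr (1/t) * sE powr (1/(t/(t-1))))"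
    proof (rule holder_set[OF _ _ _ _ Em t refl])
      show "(\<integral>\<^sup>+x\<in>E. ennreal ((w x powr (1/t)) powr t) \<partial>lebesgue) = ennreal wE"
        using t wnn wE by (simp add: powr_powr)
      have "(w x powr (-1/t)) powr (t/(t-1)) = \<sigma> x" for x
        using t by (simp add: powr_powr \<sigma>_def)
      then show "(\<integral>\<^sup>+x\<in>E. ennreal ((w x powr (-1/t)) powr (t/(t-1))) \<partial>lebesgue) = ennreal sE"
        using sE by simp
    qed (use wE sE in auto)
    moreover have "(\<integral>\<^sup>+x\<in>E. ennreal (w x powr (1/t) * w x powr (-1/t)) \<partial>lebesgue) = emeasure lebesgue E"
    proof -
      have "AE x in lebesgue. ennreal (w x powr (1/t) * w x powr (-1/t)) * indicator E x = indicator E x"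
        using wpos by eventually_elim (simp add: powr_add[symmetric])
      then have "(\<integral>\<^sup>+x\<in>E. ennreal (w x powr (1/t) * w x powr (-1/t)) \<partial>lebesgue) = (\<integral>\<^sup>+x. indicator E x \<partial>lebesgue)"
        by (rule nn_integral_cong_AE)
      then show ?thesis by simp
    qed
    ultimately have "L - mF \<le> wE powr (1/t) * sE powr ((t-1)/t)"
      using emE by simp
    then have "(L - mF) powr t \<le> (wE powr (1/t) * sE powr ((t-1)/t)) powr t"
      using mE Lpos t by (intro powr_mono2) auto
    also have "\<dots> = wE * sE powr (t-1)"
      using t wE by (simp add: powr_mult powr_powr)
    also have "\<dots> \<le> wE * sR powr (t-1)"
      using t sE wE by (intro mult_left_mono powr_mono2) auto
    finally have h1: "(L - mF) powr t \<le> wE * sR powr (t-1)" .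
    have "(L / 2) powr t \<le> (L - mF) powr t" using mE Lpos t by (intro powr_mono2) auto
    with h1 have h2: "(L / 2) powr t * wR \<le> wE * sR powr (t-1) * wR"
      using wR by (intro mult_right_mono) auto
    have "avg R w = wR / L" using wR l unfolding R_def L_def D_def by (intro avg_cube) auto
    moreover have "avg R (\<lambda>x. w x powr (-1/(t-1))) = sR / L"
      using sR l unfolding R_def L_def D_def \<sigma>_def by (intro avg_cube) auto
    ultimately have "wR / L * (sR / L) powr (t-1) \<le> C'"
      using C[OF l, of c] unfolding R_def C'_def by simp
    then have "wR * sR powr (t-1) / (L * L powr (t-1)) \<le> C'"
      using Lpos by (simp add: powr_divide field_simps)
    moreover have "L * L powr (t-1) = L powr t"
      using Lpos by (simp add: powr_mult_base)
    ultimately have h3: "wR * sR powr (t-1) \<le> C' * L powr t"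
      using Lpos by (simp add: divide_le_eq)
    have "wE * sR powr (t-1) * wR = wE * (wR * sR powr (t-1))" by simp
    also have "\<dots> \<le> wE * (C' * L powr t)" using h3 wE(2) by (rule mult_left_mono)
    finally have "(L / 2) powr t * wR \<le> wE * (C' * L powr t)" using h2 by linarith
    moreover have "(L / 2) powr t = L powr t * 2 powr (-t)"
      by (simp add: powr_divide powr_minus_divide)
    ultimately have "L powr t * (2 powr (-t) * wR) \<le> L powr t * (C' * wE)"
      by (simp add: algebra_simps)
    then have "2 powr (-t) * wR \<le> C' * wE" using Lpos by simp
    then have bw: "\<beta> * wR \<le> wE" using C'1 by (simp add: \<beta>_def field_simps)
    have RFE: "R = F \<union> E" "F \<inter> E = {}" using FR' by (auto simp: E_def)
    have "ennreal wR = (\<integral>\<^sup>+x\<in>F. ennreal (w x) \<partial>lebesgue) + ennreal wE"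
      using wR(1)[symmetric] wE(1) RFE by (simp add: set_nn_integral_split)
    moreover obtain wF where wF0: "(\<integral>\<^sup>+x\<in>F. ennreal (w x) \<partial>lebesgue) = ennreal wF" "0 \<le> wF"
      using set_nn_integral_mono_set[OF FR', where f="\<lambda>x. ennreal (w x)" and M=lebesgue] wR(2) unfolding wR(1) by (rule ennreal_le_fin)
    ultimately have "ennreal wR = ennreal (wF + wE)" using wE(2) by simp
    then have "wR = wF + wE" using wF0(2) wE(2) wR(2) by (subst (asm) ennreal_inj) auto
    note wF = wF0 this
    have "wF \<le> (1 - \<beta>) * wR" using wF bw by (simp add: algebra_simps)
    then have "ennreal wF \<le> ennreal ((1 - \<beta>) * wR)" by (rule ennreal_leI)
    also have "\<dots> = ennreal (1 - \<beta>) * ennreal wR" using \<beta>1 wR by (simp add: ennreal_mult)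
    finally show "(\<integral>\<^sup>+x\<in>F. ennreal (w x) \<partial>lebesgue) \<le> ennreal (1 - \<beta>) * (\<integral>\<^sup>+x\<in>cube c l. ennreal (w x) \<partial>lebesgue)"
      using wF wR unfolding R_def by simp
  qed
qed

definition II :: "('a::euclidean_space \<Rightarrow> real) \<Rightarrow> 'a set \<Rightarrow> ennreal" where
  "II g X = (\<integral>\<^sup>+x\<in>X. ennreal (g x) \<partial>lebesgue)"

fun Om :: "nat \<Rightarrow> real \<Rightarrow> ('a::euclidean_space \<Rightarrow> real) \<Rightarrow> 'a \<Rightarrow> real \<Rightarrow> 'a set" where
  "Om 0 lam g a h = (if lam < avg (cube a h) g then cube a h else {})"
| "Om (Suc N) lam g a h = (if lam < avg (cube a h) g then cube a h
      else (\<Union>S\<in>Pow Basis. Om N lam g (child a h S) (h/2)))"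

fun Fc :: "nat \<Rightarrow> 'a set \<Rightarrow> 'a::euclidean_space \<Rightarrow> real \<Rightarrow> 'a set" where
  "Fc 0 A a h = (if cube a h \<inter> A \<noteq> {} then cube a h else {})"
| "Fc (Suc N) A a h = (\<Union>S\<in>Pow Basis. Fc N A (child a h S) (h/2))"

lemma II_empty [simp]: "II g {} = 0" by (simp add: II_def)

lemma II_mono: "X \<subseteq> Y \<Longrightarrow> II g X \<le> II g Y"
  unfolding II_def by (rule set_nn_integral_mono_set)

lemma children_II:
  assumes g[measurable]: "g \<in> borel_measurable lebesgue"
    and X: "\<And>S. S \<subseteq> Basis \<Longrightarrow> X S \<in> sets lebesgue \<and> X S \<subseteq> cube (child a h S) (h/2)"
  shows "II g (\<Union>S\<in>Pow Basis. X S) = (\<Sum>S\<in>Pow Basis. II g (X S))"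
  unfolding II_def by (rule nn_integral_children) (use X in auto)

lemma children_emeasure:
  assumes X: "\<And>S. S \<subseteq> Basis \<Longrightarrow> X S \<in> sets lebesgue \<and> X S \<subseteq> cube (child a h S) (h/2)"
  shows "emeasure lebesgue (\<Union>S\<in>Pow Basis. X S) = (\<Sum>S\<in>Pow Basis. emeasure lebesgue (X S))"
proof -
  have "(\<integral>\<^sup>+x\<in>(\<Union>S\<in>Pow Basis. X S). 1 \<partial>lebesgue) = (\<Sum>S\<in>Pow Basis. \<integral>\<^sup>+x\<in>X S. 1 \<partial>lebesgue)"
    by (rule nn_integral_children) (use X in auto)
  moreover have "(\<Union>S\<in>Pow Basis. X S) \<in> sets lebesgue" using X by auto
  ultimately show ?thesis using X by simp
qed

lemma Om_sub:
  assumes "0 \<le> h"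
  shows "Om N lam g a h \<subseteq> cube a h \<and> Om N lam g a h \<in> sets lebesgue"
  using assms
proof (induction N arbitrary: a h)
  case 0
  then show ?case by auto
next
  case (Suc N)
  have "Om N lam g (child a h S) (h/2) \<subseteq> cube a h" if "S \<subseteq> Basis" for S
    using Suc.IH[of "h/2" "child a h S"] child_sub[OF Suc.prems that] Suc.prems by auto
  moreover have "Om N lam g (child a h S) (h/2) \<in> sets lebesgue" for S
    using Suc.IH[of "h/2" "child a h S"] Suc.prems by auto
  ultimately show ?case by auto
qed

lemma Om_big: "lam < avg (cube a h) g \<Longrightarrow> Om N lam g a h = cube a h"
  by (cases N) auto

lemma Om_small: "\<not> lam < avg (cube a h) g \<Longrightarrow> Om (Suc N) lam g a h = (\<Union>S\<in>Pow Basis. Om N lam g (child a h S) (h/2))"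
  by simp

lemma Om_mono: "Om N lam g a h \<subseteq> Om (Suc N) lam g a h"
proof (induction N arbitrary: a h)
  case 0
  then show ?case by auto
next
  case (Suc N)
  show ?case
  proof (cases "lam < avg (cube a h) g")
    case True
    then show ?thesis by simp
  next
    case False
    show ?thesis unfolding Om_small[OF False] using Suc.IH by blast
  qed
qed

lemma Om_mono_le: "N \<le> N' \<Longrightarrow> Om N lam g a h \<subseteq> Om N' lam g a h"
  by (induction N' rule: dec_induct) (use Om_mono in blast)+


lemma Fc_empty:
  assumes "0 \<le> h" "A \<inter> cube a h = {}"
  shows "Fc N A a h = {}"
  using assms
proof (induction N arbitrary: a h)
  case 0
  then show ?case by auto
next
  case (Suc N)
  have "Fc N A (child a h S) (h/2) = {}" if "S \<subseteq> Basis" for S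
    using Suc.IH[of "h/2" "child a h S"] child_sub[OF Suc.prems(1) that, of a] Suc.prems by auto
  then show ?case by auto
qed

lemma Fc_sub:
  assumes "0 \<le> h"
  shows "A \<inter> cube a h \<subseteq> Fc N A a h \<and> Fc N A a h \<subseteq> cube a h \<and> Fc N A a h \<in> sets lebesgue"
  using assms
proof (induction N arbitrary: a h)
  case 0
  then show ?case by auto
next
  case (Suc N)
  have IH: "A \<inter> cube (child a h S) (h/2) \<subseteq> Fc N A (child a h S) (h/2) \<and> Fc N A (child a h S) (h/2) \<subseteq> cube (child a h S) (h/2)
     \<and> Fc N A (child a h S) (h/2) \<in> sets lebesgue" for S
    using Suc.IH[of "h/2" "child a h S"] Suc.prems by auto
  have "A \<inter> cube a h \<subseteq> Fc (Suc N) A a h"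
  proof
    fix x assume "x \<in> A \<inter> cube a h"
    then obtain S where "S \<in> Pow Basis" "x \<in> A \<inter> cube (child a h S) (h/2)"
      using cube_children[OF Suc.prems, of a] by auto
    then show "x \<in> Fc (Suc N) A a h" using IH[of S] by auto
  qed
  moreover have "Fc (Suc N) A a h \<subseteq> cube a h"
  proof
    fix x assume "x \<in> Fc (Suc N) A a h"
    then obtain S where S: "S \<subseteq> Basis" "x \<in> Fc N A (child a h S) (h/2)" by auto
    then show "x \<in> cube a h" using IH[of S] child_sub[OF Suc.prems S(1), of a] by blast
  qed
  moreover have "Fc (Suc N) A a h \<in> sets lebesgue" using IH by auto
  ultimately show ?case by blast
qed

lemma Fc_near:
  assumes "0 \<le> h" "y \<in> Fc N A a h"
  shows "\<exists>z\<in>A. \<forall>i\<in>Basis. \<bar>y \<bullet> i - z \<bullet> i\<bar> \<le> h / 2 ^ N"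
  using assms
proof (induction N arbitrary: a h)
  case 0
  then obtain z where z: "z \<in> A" "z \<in> cube a h" "y \<in> cube a h" by (auto split: if_splits)
  have "\<forall>i\<in>Basis. \<bar>y \<bullet> i - z \<bullet> i\<bar> \<le> h"
  proof
    fix i :: 'a assume i: "i \<in> Basis"
    have "a \<bullet> i \<le> z \<bullet> i" "z \<bullet> i \<le> a \<bullet> i + h" "a \<bullet> i \<le> y \<bullet> i" "y \<bullet> i \<le> a \<bullet> i + h"
      using z i by (auto simp: mem_cube)
    then show "\<bar>y \<bullet> i - z \<bullet> i\<bar> \<le> h" by linarith
  qed
  then show ?case using z by auto
next
  case (Suc N)
  then obtain S where "y \<in> Fc N A (child a h S) (h/2)" by auto
  from Suc.IH[OF _ this] Suc.prems show ?case by simp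
qed

locale locint =
  fixes g :: "'a::euclidean_space \<Rightarrow> real"
  assumes gm[measurable]: "g \<in> borel_measurable lebesgue"
    and gnn: "\<And>x. 0 \<le> g x"
    and gfin: "\<And>a h. 0 < h \<Longrightarrow> II g (cube a h) \<noteq> \<infinity>"
begin

lemma cube_real:
  assumes "0 < h"
  obtains G where "II g (cube a h) = ennreal G" "0 \<le> G" "avg (cube a h) g = G / h ^ DIM('a)"
proof -
  obtain G where G: "II g (cube a h) = ennreal G" "0 \<le> G" using gfin[OF assms, of a] by (rule fin_real)
  then have "avg (cube a h) g = G / h ^ DIM('a)"
    using assms by (intro avg_cube) (auto simp: II_def)
  with G that show ?thesis by blast
qed

lemma weak_type:
  assumes "0 < h" "0 \<le> lam"
  shows "ennreal lam * emeasure lebesgue (Om N lam g a h) \<le> II g (Om N lam g a h)"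
  using assms
proof (induction N arbitrary: a h)
  case 0
  show ?case
  proof (cases "lam < avg (cube a h) g")
    case True
    obtain G where G: "II g (cube a h) = ennreal G" "0 \<le> G" "avg (cube a h) g = G / h ^ DIM('a)"
      using cube_real[OF "0.prems"(1)] by blast
    have "lam * h ^ DIM('a) \<le> G" using True G "0.prems" by (simp add: field_simps)
    then have "ennreal lam * ennreal (h ^ DIM('a)) \<le> ennreal G"
      using "0.prems" by (subst ennreal_mult[symmetric]) (auto intro: ennreal_leI)
    moreover have "emeasure lebesgue (cube a h) = ennreal (h ^ DIM('a))" by (rule emeasure_cube) (use "0.prems" in simp)
    ultimately show ?thesis unfolding Om_big[OF True] G(1) by simp
  next
    case False
    then show ?thesis by simp
  qed
next
  case (Suc N)
  show ?case
  proof (cases "lam < avg (cube a h) g")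
    case True
    obtain G where G: "II g (cube a h) = ennreal G" "0 \<le> G" "avg (cube a h) g = G / h ^ DIM('a)"
      using cube_real[OF Suc.prems(1)] by blast
    have "lam * h ^ DIM('a) \<le> G" using True G Suc.prems by (simp add: field_simps)
    then have "ennreal lam * ennreal (h ^ DIM('a)) \<le> ennreal G"
      using Suc.prems by (subst ennreal_mult[symmetric]) (auto intro: ennreal_leI)
    moreover have "emeasure lebesgue (cube a h) = ennreal (h ^ DIM('a))" by (rule emeasure_cube) (use Suc.prems in simp)
    ultimately show ?thesis unfolding Om_big[OF True] G(1) by simp
  next
    case False
    define X where "X S = Om N lam g (child a h S) (h/2)" for S
    have X: "X S \<in> sets lebesgue \<and> X S \<subseteq> cube (child a h S) (h/2)" for S
      using Om_sub[of "h/2" N lam g "child a h S"] Suc.prems unfolding X_def by auto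
    have eq: "Om (Suc N) lam g a h = (\<Union>S\<in>Pow Basis. X S)" using False by (simp add: X_def)
    have "ennreal lam * emeasure lebesgue (Om (Suc N) lam g a h) = (\<Sum>S\<in>Pow Basis. ennreal lam * emeasure lebesgue (X S))"
      unfolding eq children_emeasure[OF X] sum_distrib_left ..
    also have "\<dots> \<le> (\<Sum>S\<in>Pow Basis. II g (X S))"
      by (rule sum_mono) (use Suc.IH Suc.prems in \<open>auto simp: X_def\<close>)
    also have "\<dots> = II g (Om (Suc N) lam g a h)"
      unfolding eq children_II[OF gm X] ..
    finally show ?thesis .
  qed
qed

lemma le_two_pow_mult: "0 \<le> (lam::real) \<Longrightarrow> lam \<le> 2 ^ n * lam"
  using mult_right_mono[of 1 "2 ^ n" lam] by simp

lemma good_lambda: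
  assumes \<beta>: "0 < \<beta>" "\<beta> < 1"
    and ainf: "\<And>c l F. 0 < l \<Longrightarrow> F \<in> sets lebesgue \<Longrightarrow> F \<subseteq> cube c l \<Longrightarrow>
       emeasure lebesgue F \<le> ennreal (l ^ DIM('a) / 2) \<Longrightarrow> II g F \<le> ennreal (1 - \<beta>) * II g (cube c l)"
    and h: "0 < h" and lam: "0 < lam" and av: "avg (cube a h) g \<le> lam"
  shows "II g (Om N (2 ^ (DIM('a) + 1) * lam) g a h) \<le> ennreal (1 - \<beta>) * II g (Om N lam g a h)"
  using h av
proof (induction N arbitrary: a h)
  case 0
  have "\<not> 2 ^ (DIM('a) + 1) * lam < avg (cube a h) g"
  proof -
    have "lam \<le> 2 ^ (DIM('a) + 1) * lam" using lam by (intro le_two_pow_mult) simp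
    then show ?thesis using "0.prems" by linarith
  qed
  then show ?case using "0.prems" by simp
next
  case (Suc N)
  define M :: real where "M = 2 ^ (DIM('a) + 1)"
  have M1: "lam \<le> M * lam" unfolding M_def using lam by (intro le_two_pow_mult) simp
  have n1: "\<not> lam < avg (cube a h) g" using Suc.prems by simp
  have n2: "\<not> M * lam < avg (cube a h) g" using Suc.prems M1 by simp
  define X1 where "X1 S = Om N (M * lam) g (child a h S) (h/2)" for S
  define X2 where "X2 S = Om N lam g (child a h S) (h/2)" for S
  have X1: "X1 S \<in> sets lebesgue \<and> X1 S \<subseteq> cube (child a h S) (h/2)" for S
    using Om_sub[of "h/2" N "M * lam" g "child a h S"] Suc.prems unfolding X1_def by auto
  have X2: "X2 S \<in> sets lebesgue \<and> X2 S \<subseteq> cube (child a h S) (h/2)" for S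
    using Om_sub[of "h/2" N lam g "child a h S"] Suc.prems unfolding X2_def by auto
  have eq1: "Om (Suc N) (M * lam) g a h = (\<Union>S\<in>Pow Basis. X1 S)" using n2 by (simp add: X1_def)
  have eq2: "Om (Suc N) lam g a h = (\<Union>S\<in>Pow Basis. X2 S)" using n1 by (simp add: X2_def)
  obtain G where G: "II g (cube a h) = ennreal G" "0 \<le> G" "avg (cube a h) g = G / h ^ DIM('a)"
    using cube_real[OF Suc.prems(1)] by blast
  have "G / h ^ DIM('a) \<le> lam" using G Suc.prems by simp
  then have Gle: "G \<le> lam * h ^ DIM('a)" using Suc.prems by (simp add: divide_le_eq)
  have each: "II g (X1 S) \<le> ennreal (1 - \<beta>) * II g (X2 S)" if S: "S \<subseteq> Basis" for S
  proof (cases "lam < avg (cube (child a h S) (h/2)) g")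
    case False
    then show ?thesis using Suc.IH[of "h/2" "child a h S"] Suc.prems unfolding X1_def X2_def M_def by simp
  next
    case True
    have X2c: "X2 S = cube (child a h S) (h/2)" unfolding X2_def by (rule Om_big[OF True])
    have Fsub: "X1 S \<subseteq> cube (child a h S) (h/2)" using X1 by blast
    have Fm: "X1 S \<in> sets lebesgue" using X1 by blast
    have "ennreal (M * lam) * emeasure lebesgue (X1 S) \<le> II g (X1 S)"
      unfolding X1_def by (rule weak_type) (use Suc.prems lam in \<open>auto simp: M_def\<close>)
    also have "\<dots> \<le> II g (cube a h)"
      using Fsub child_sub[of h S a] S Suc.prems by (intro II_mono) auto
    finally have mle: "ennreal (M * lam) * emeasure lebesgue (X1 S) \<le> ennreal G" using G by simp
    have "emeasure lebesgue (X1 S) \<le> emeasure lebesgue (cube (child a h S) (h/2))"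
      using Fsub by (intro emeasure_mono) auto
    also have "\<dots> = ennreal ((h/2) ^ DIM('a))" by (rule emeasure_cube) (use Suc.prems in simp)
    finally obtain mF where mF: "emeasure lebesgue (X1 S) = ennreal mF" "0 \<le> mF"
      by (rule ennreal_le_fin) (use Suc.prems in simp)
    have "ennreal (M * lam * mF) \<le> ennreal G"
      using mle mF lam by (simp add: M_def ennreal_mult)
    then have "M * lam * mF \<le> G" using G(2) by simp
    then have "M * lam * mF \<le> lam * h ^ DIM('a)" using Gle by linarith
    then have "lam * (M * mF) \<le> lam * h ^ DIM('a)" by (simp add: algebra_simps)
    then have "M * mF \<le> h ^ DIM('a)" using lam by simp
    then have "mF \<le> (h/2) ^ DIM('a) / 2"
      by (simp add: M_def power_divide field_simps)
    then have "emeasure lebesgue (X1 S) \<le> ennreal ((h/2) ^ DIM('a) / 2)" using mF by simp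
    then have "II g (X1 S) \<le> ennreal (1 - \<beta>) * II g (cube (child a h S) (h/2))"
      by (intro ainf Fm Fsub) (use Suc.prems in simp)
    then show ?thesis unfolding X2c .
  qed
  have "II g (Om (Suc N) (M * lam) g a h) = (\<Sum>S\<in>Pow Basis. II g (X1 S))"
    unfolding eq1 children_II[OF gm X1] ..
  also have "\<dots> \<le> (\<Sum>S\<in>Pow Basis. ennreal (1 - \<beta>) * II g (X2 S))"
    by (rule sum_mono) (use each in auto)
  also have "\<dots> = ennreal (1 - \<beta>) * II g (Om (Suc N) lam g a h)"
    unfolding eq2 children_II[OF gm X2] sum_distrib_left ..
  finally show ?case unfolding M_def .
qed

lemma Fc_bound:
  assumes "0 < h" "0 \<le> lam" "A \<inter> Om N lam g a h = {}"
  shows "II g (Fc N A a h) \<le> ennreal lam * emeasure lebesgue (Fc N A a h)"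
  using assms
proof (induction N arbitrary: a h)
  case 0
  show ?case
  proof (cases "cube a h \<inter> A \<noteq> {}")
    case True
    then have nb: "\<not> lam < avg (cube a h) g" using "0.prems" by auto
    obtain G where G: "II g (cube a h) = ennreal G" "0 \<le> G" "avg (cube a h) g = G / h ^ DIM('a)"
      using cube_real[OF "0.prems"(1)] by blast
    have "G / h ^ DIM('a) \<le> lam" using G nb by simp
    then have "G \<le> lam * h ^ DIM('a)" using "0.prems" by (simp add: divide_le_eq)
    then have "ennreal G \<le> ennreal lam * ennreal (h ^ DIM('a))"
      using "0.prems" by (subst ennreal_mult[symmetric]) (auto intro: ennreal_leI)
    moreover have "emeasure lebesgue (cube a h) = ennreal (h ^ DIM('a))" by (rule emeasure_cube) (use "0.prems" in simp)
    ultimately show ?thesis using True G(1) by simp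
  next
    case False
    then show ?thesis by simp
  qed
next
  case (Suc N)
  show ?case
  proof (cases "lam < avg (cube a h) g")
    case True
    then have "A \<inter> cube a h = {}" using Suc.prems Om_big[OF True, of "Suc N"] by simp
    then have "Fc (Suc N) A a h = {}" by (rule Fc_empty[rotated]) (use Suc.prems in simp)
    then show ?thesis by simp
  next
    case False
    define X where "X S = Fc N A (child a h S) (h/2)" for S
    have X: "X S \<in> sets lebesgue \<and> X S \<subseteq> cube (child a h S) (h/2)" for S
      using Fc_sub[of "h/2" A "child a h S" N] Suc.prems unfolding X_def by auto
    have eq: "Fc (Suc N) A a h = (\<Union>S\<in>Pow Basis. X S)" by (simp add: X_def)
    have disj: "A \<inter> Om N lam g (child a h S) (h/2) = {}" if "S \<subseteq> Basis" for S
      using Suc.prems(3) False that by auto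
    have "II g (Fc (Suc N) A a h) = (\<Sum>S\<in>Pow Basis. II g (X S))"
      unfolding eq children_II[OF gm X] ..
    also have "\<dots> \<le> (\<Sum>S\<in>Pow Basis. ennreal lam * emeasure lebesgue (X S))"
      by (rule sum_mono) (use Suc.IH disj Suc.prems in \<open>auto simp: X_def\<close>)
    also have "\<dots> = ennreal lam * emeasure lebesgue (Fc (Suc N) A a h)"
      unfolding eq children_emeasure[OF X] sum_distrib_left ..
    finally show ?thesis .
  qed
qed

end

lemma emeasure_box_sym:
  fixes x :: "'a::euclidean_space"
  assumes "0 \<le> l" "0 \<le> k"
  shows "emeasure lebesgue (cube (x - k *\<^sub>R One) (l + 2 * k)) = ennreal ((l + 2 * k) ^ DIM('a))"
  by (rule emeasure_cube) (use assms in simp)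

context locint
begin

lemma diff_Om:
  assumes h: "0 < h" and lam: "0 \<le> lam"
  shows "AE x in lebesgue. x \<in> cube a h \<longrightarrow> lam < g x \<longrightarrow> (\<exists>N. x \<in> Om N lam g a h)"
proof -
  define Q where "Q = cube a h"
  define Gs where "Gs = Q - (\<Union>N. Om N lam g a h)"
  have Omm: "Om N lam g a h \<in> sets lebesgue" for N using Om_sub[of h N lam g a] h by auto
  have Gsm[measurable]: "Gs \<in> sets lebesgue" unfolding Gs_def Q_def using Omm by auto
  have GsQ: "Gs \<subseteq> Q" by (auto simp: Gs_def)
  define f where "f y = g y * indicator Gs y" for y
  have fm[measurable]: "f \<in> borel_measurable lebesgue" unfolding f_def by measurable
  have fnn: "0 \<le> f y" for y using gnn by (simp add: f_def)
  have "(\<integral>\<^sup>+y. ennreal (norm (f y)) \<partial>lebesgue) \<le> II g Q"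
    unfolding II_def using GsQ fnn by (intro nn_integral_mono) (auto simp: f_def indicator_def)
  also have "\<dots> < \<infinity>" using gfin[OF h, of a] by (simp add: Q_def less_top)
  finally have "integrable lebesgue f" by (intro integrableI_bounded) auto
  then have fUNIV: "f integrable_on UNIV" by (rule integrable_on_lebesgue)
  have "f integrable_on cbox u v" for u v by (rule integrable_on_subcbox[OF fUNIV]) auto
  then obtain N0 where N0: "negligible N0"
    and N0d: "\<And>x e. \<lbrakk>x \<notin> N0; 0 < e\<rbrakk> \<Longrightarrow>
               \<exists>d>0. \<forall>h. 0 < h \<and> h < d \<longrightarrow>
                         norm(integral (cbox x (x + h *\<^sub>R One)) f /\<^sub>R h ^ DIM('a) - f x) < e"
    using integrable_ccontinuous_explicit[of f] by metis
  define B where "B = N0 \<union> (cbox a (a + h *\<^sub>R One) - box a (a + h *\<^sub>R One))"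
  have "negligible B" unfolding B_def using N0 negligible_frontier_interval by (rule negligible_Un)
  then have Bnull: "B \<in> null_sets lebesgue" by (simp add: negligible_iff_null_sets)
  show ?thesis
  proof (rule AE_I'[OF Bnull], intro subsetI)
    fix x assume "x \<in> {x \<in> space lebesgue. \<not> (x \<in> cube a h \<longrightarrow> lam < g x \<longrightarrow> (\<exists>N. x \<in> Om N lam g a h))}"
    then have xQ: "x \<in> cube a h" and gx: "lam < g x" and nO: "\<forall>N. x \<notin> Om N lam g a h" by auto
    show "x \<in> B"
    proof (rule ccontr)
      assume xB: "x \<notin> B"
      then have xN0: "x \<notin> N0" and xbox: "x \<in> box a (a + h *\<^sub>R One)"
        using xQ by (auto simp: B_def cube_def)
      have xGs: "x \<in> Gs" using xQ nO by (auto simp: Gs_def Q_def)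
      then have fx: "f x = g x" by (simp add: f_def)
      obtain d where d: "d > 0" and dd: "\<And>h'. 0 < h' \<Longrightarrow> h' < d \<Longrightarrow>
          norm(integral (cbox x (x + h' *\<^sub>R One)) f /\<^sub>R h' ^ DIM('a) - f x) < g x - lam"
        using N0d[OF xN0, of "g x - lam"] gx by auto
      define m where "m = (MIN i\<in>Basis. a \<bullet> i + h - x \<bullet> i)"
      have mpos: "0 < m" unfolding m_def
        using xbox by (subst Min_gr_iff) (auto simp: mem_box inner_add_left)
      have mle: "m \<le> a \<bullet> i + h - x \<bullet> i" if "i \<in> Basis" for i
        unfolding m_def using that by (intro Min_le) auto
      define h' where "h' = min (d/2) m"
      have h'pos: "0 < h'" using d mpos by (simp add: h'_def)
      have h'd: "h' < d" using d by (simp add: h'_def)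
      have subQ: "cube x h' \<subseteq> Q"
      proof
        fix y assume y: "y \<in> cube x h'"
        show "y \<in> Q" unfolding Q_def mem_cube
        proof
          fix i :: 'a assume i: "i \<in> Basis"
          have "x \<bullet> i \<le> y \<bullet> i" "y \<bullet> i \<le> x \<bullet> i + h'" using y i by (auto simp: mem_cube)
          moreover have "a \<bullet> i < x \<bullet> i" using xbox i by (auto simp: mem_box inner_add_left)
          moreover have "h' \<le> a \<bullet> i + h - x \<bullet> i" using mle[OF i] by (simp add: h'_def)
          ultimately show "a \<bullet> i \<le> y \<bullet> i \<and> y \<bullet> i \<le> a \<bullet> i + h" by linarith
        qed
      qed
      define I where "I = integral (cbox x (x + h' *\<^sub>R One)) f"
      have "(f has_integral I) (cbox x (x + h' *\<^sub>R One))"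
        unfolding I_def by (rule integrable_integral) (rule integrable_on_subcbox[OF fUNIV]; auto)
      then have "((\<lambda>y. if y \<in> cbox x (x + h' *\<^sub>R One) then f y else 0) has_integral I) UNIV"
        by (subst has_integral_restrict_UNIV)
      then have "integral\<^sup>N lebesgue (\<lambda>y. ennreal (if y \<in> cbox x (x + h' *\<^sub>R One) then f y else 0)) = ennreal I"
        and I0: "0 \<le> I"
        by (subst (asm) has_integral_iff_nn_integral_lebesgue; use fnn in auto)+
      moreover have "(\<lambda>y. ennreal (if y \<in> cbox x (x + h' *\<^sub>R One) then f y else 0))
          = (\<lambda>y. ennreal (g y) * indicator (cube x h' \<inter> Gs) y)"
        by (auto simp: fun_eq_iff f_def cube_def indicator_def)
      ultimately have IA: "II g (cube x h' \<inter> Gs) = ennreal I" by (simp add: II_def)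
      define A where "A = cube x h' \<inter> Gs"
      have AQ: "A \<subseteq> Q" using subQ by (auto simp: A_def)
      have AO: "A \<inter> Om N lam g a h = {}" for N by (auto simp: A_def Gs_def)
      have bound: "I \<le> lam * (h' + 2 * (h / 2 ^ N)) ^ DIM('a)" for N
      proof -
        define k where "k = h / 2 ^ N"
        have k0: "0 \<le> k" using h by (simp add: k_def)
        have "ennreal I = II g A" using IA by (simp add: A_def)
        also have "\<dots> \<le> II g (Fc N A a h)"
          using Fc_sub[of h A a N] h AQ by (intro II_mono) (auto simp: Q_def)
        also have "\<dots> \<le> ennreal lam * emeasure lebesgue (Fc N A a h)"
          by (rule Fc_bound[OF h lam AO])
        also have "emeasure lebesgue (Fc N A a h) \<le> emeasure lebesgue (cube (x - k *\<^sub>R One) (h' + 2 * k))"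
        proof (rule emeasure_mono)
          show "Fc N A a h \<subseteq> cube (x - k *\<^sub>R One) (h' + 2 * k)"
          proof
            fix y assume y: "y \<in> Fc N A a h"
            obtain z where z: "z \<in> A" "\<forall>i\<in>Basis. \<bar>y \<bullet> i - z \<bullet> i\<bar> \<le> k"
              using Fc_near[OF _ y] h by (auto simp: k_def)
            show "y \<in> cube (x - k *\<^sub>R One) (h' + 2 * k)" unfolding mem_cube
            proof
              fix i :: 'a assume i: "i \<in> Basis"
              have "x \<bullet> i \<le> z \<bullet> i" "z \<bullet> i \<le> x \<bullet> i + h'" using z(1) i by (auto simp: A_def mem_cube)
              moreover have "\<bar>y \<bullet> i - z \<bullet> i\<bar> \<le> k" using z(2) i by auto
              ultimately show "(x - k *\<^sub>R One) \<bullet> i \<le> y \<bullet> i \<and> y \<bullet> i \<le> (x - k *\<^sub>R One) \<bullet> i + (h' + 2 * k)"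
                using i by (auto simp: inner_diff_left)
            qed
          qed
        qed auto
        also have "\<dots> = ennreal ((h' + 2 * k) ^ DIM('a))"
          by (rule emeasure_box_sym) (use h'pos k0 in auto)
        finally have "ennreal I \<le> ennreal lam * ennreal ((h' + 2 * k) ^ DIM('a))"
          by (simp add: mult_left_mono)
        then have "ennreal I \<le> ennreal (lam * (h' + 2 * k) ^ DIM('a))"
          using lam h'pos k0 by (simp add: ennreal_mult)
        then show ?thesis using lam h'pos k0 unfolding k_def by (subst (asm) ennreal_le_iff) auto
      qed
      have lim: "(\<lambda>N. lam * (h' + 2 * (h / 2 ^ N)) ^ DIM('a)) \<longlonglongrightarrow> lam * (h' + 2 * 0) ^ DIM('a)"
        by (intro tendsto_intros LIMSEQ_divide_realpow_zero) auto
      have "I \<le> lam * (h' + 2 * 0) ^ DIM('a)"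
        by (rule LIMSEQ_le_const[OF lim]) (use bound in auto)
      then have "I / h' ^ DIM('a) \<le> lam" using h'pos by (simp add: divide_le_eq mult.commute)
      moreover have "norm (I /\<^sub>R h' ^ DIM('a) - f x) < g x - lam"
        using dd[OF h'pos h'd] by (simp add: I_def)
      moreover have "I /\<^sub>R h' ^ DIM('a) = I / h' ^ DIM('a)" by (simp add: divide_inverse_commute)
      ultimately have "\<bar>I / h' ^ DIM('a) - g x\<bar> < g x - lam" "I / h' ^ DIM('a) \<le> lam" using fx by auto
      then show False by linarith
    qed
  qed
qed

end

context locint
begin

lemma II_Un_Om:
  assumes h: "0 < h"
  shows "II g (\<Union>N. Om N lam g a h) = (SUP N. II g (Om N lam g a h))"
proof -
  have Omm: "Om N lam g a h \<in> sets lebesgue" for N using Om_sub[of h N lam g a] h by auto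
  define D where "D = density lebesgue (\<lambda>x. ennreal (g x))"
  have sD: "sets D = sets lebesgue" by (simp add: D_def)
  have eq: "II g X = emeasure D X" if "X \<in> sets lebesgue" for X
    using that by (simp add: D_def emeasure_density II_def)
  have inc: "incseq (\<lambda>N. Om N lam g a h)" by (rule incseq_SucI) (rule Om_mono)
  have "(SUP N. emeasure D (Om N lam g a h)) = emeasure D (\<Union>N. Om N lam g a h)"
    by (rule SUP_emeasure_incseq) (use Omm inc sD in auto)
  moreover have "(\<Union>N. Om N lam g a h) \<in> sets lebesgue" using Omm by auto
  ultimately show ?thesis using Omm by (simp add: eq)
qed

lemma RH:
  assumes \<beta>: "0 < \<beta>" "\<beta> < 1"
    and ainf: "\<And>c l F. 0 < l \<Longrightarrow> F \<in> sets lebesgue \<Longrightarrow> F \<subseteq> cube c l \<Longrightarrow>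
       emeasure lebesgue F \<le> ennreal (l ^ DIM('a) / 2) \<Longrightarrow> II g F \<le> ennreal (1 - \<beta>) * II g (cube c l)"
  obtains \<delta> K where "0 < \<delta>" "0 \<le> K"
    "\<And>a h. 0 < h \<Longrightarrow> (\<integral>\<^sup>+x\<in>cube a h. ennreal (g x powr (1 + \<delta>)) \<partial>lebesgue)
        \<le> ennreal (K * h ^ DIM('a) * avg (cube a h) g powr (1 + \<delta>))"
proof -
  define M :: real where "M = 2 ^ (DIM('a) + 1)"
  have M1: "1 < M" unfolding M_def by (rule one_less_power) auto
  have "((\<lambda>d. M powr d * (1 - \<beta>)) \<longlongrightarrow> M powr 0 * (1 - \<beta>)) (at_right 0)"
    using M1 by (intro tendsto_intros) auto
  moreover have "M powr 0 * (1 - \<beta>) < 1" using M1 \<beta> by simp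
  ultimately have "eventually (\<lambda>d. M powr d * (1 - \<beta>) < 1) (at_right 0)"
    by (rule order_tendstoD(2))
  then obtain b where b: "0 < b" "\<And>y. 0 < y \<Longrightarrow> y < b \<Longrightarrow> M powr y * (1 - \<beta>) < 1"
    unfolding eventually_at_right_field by auto
  define \<delta> where "\<delta> = b / 2"
  have \<delta>: "0 < \<delta>" using b by (simp add: \<delta>_def)
  define \<rho> where "\<rho> = M powr \<delta> * (1 - \<beta>)"
  have \<rho>1: "\<rho> < 1" unfolding \<rho>_def using b by (intro b) (auto simp: \<delta>_def)
  have \<rho>0: "0 \<le> \<rho>" using \<beta> by (simp add: \<rho>_def)
  define K where "K = 1 + M powr \<delta> / (1 - \<rho>)"
  have K0: "0 \<le> K" using \<rho>1 by (simp add: K_def)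
  show ?thesis
  proof (rule that[OF \<delta> K0])
    fix a :: 'a and h :: real
    assume h: "0 < h"
    define Q where "Q = cube a h"
    define L where "L = h ^ DIM('a)"
    have L0: "0 < L" using h by (simp add: L_def)
    obtain G where G: "II g Q = ennreal G" "0 \<le> G" "avg Q g = G / L"
      using cube_real[OF h, of a] unfolding Q_def L_def by blast
    define l0 where "l0 = G / L"
    have l00: "0 \<le> l0" using G L0 by (simp add: l0_def)
    have Qm[measurable]: "Q \<in> sets lebesgue" by (simp add: Q_def)
    show "(\<integral>\<^sup>+x\<in>cube a h. ennreal (g x powr (1 + \<delta>)) \<partial>lebesgue)
        \<le> ennreal (K * h ^ DIM('a) * avg (cube a h) g powr (1 + \<delta>))"
    proof (cases "G = 0")
      case True
      then have "(\<integral>\<^sup>+x. ennreal (g x) * indicator Q x \<partial>lebesgue) = 0" using G by (simp add: II_def)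
      then have "AE x in lebesgue. ennreal (g x) * indicator Q x = 0"
        by (subst (asm) nn_integral_0_iff_AE) auto
      then have "AE x in lebesgue. ennreal (g x powr (1 + \<delta>)) * indicator Q x = 0"
        by eventually_elim (use gnn in \<open>auto simp: indicator_def ennreal_eq_0_iff split: if_splits intro: order.antisym\<close>)
      then have "(\<integral>\<^sup>+x\<in>Q. ennreal (g x powr (1 + \<delta>)) \<partial>lebesgue) = 0"
        by (subst nn_integral_0_iff_AE) auto
      then show ?thesis by (simp add: Q_def)
    next
      case False
      then have l0pos: "0 < l0" using G L0 by (simp add: l0_def)
      define lk where "lk k = M ^ k * l0" for k
      have lkpos: "0 < lk k" for k using l0pos M1 by (simp add: lk_def)
      have lk0: "l0 \<le> lk k" for k
        unfolding lk_def using l0pos M1 by (simp add: mult_le_cancel_right1 one_le_power)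
      have avl: "avg (cube a h) g \<le> lk k" for k using lk0 G by (simp add: Q_def l0_def)
      have claim1: "II g (Om N (lk k) g a h) \<le> ennreal ((1 - \<beta>) ^ k) * ennreal G" for k N
      proof (induction k)
        case 0
        have "II g (Om N (lk 0) g a h) \<le> II g Q"
          using Om_sub[of h N "lk 0" g a] h by (intro II_mono) (auto simp: Q_def)
        then show ?case using G by simp
      next
        case (Suc k)
        have e: "lk (Suc k) = 2 ^ (DIM('a) + 1) * lk k" by (simp add: lk_def M_def)
        have "II g (Om N (2 ^ (DIM('a) + 1) * lk k) g a h) \<le> ennreal (1 - \<beta>) * II g (Om N (lk k) g a h)"
          by (rule good_lambda[OF \<beta> ainf h lkpos[of k] avl[of k]])
        then have "II g (Om N (lk (Suc k)) g a h) \<le> ennreal (1 - \<beta>) * II g (Om N (lk k) g a h)"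
          unfolding e .
        also have "\<dots> \<le> ennreal (1 - \<beta>) * (ennreal ((1 - \<beta>) ^ k) * ennreal G)"
          by (rule mult_left_mono[OF Suc.IH]) simp
        also have "\<dots> = ennreal ((1 - \<beta>) ^ Suc k) * ennreal G"
          using \<beta> by (simp add: ennreal_mult mult.assoc)
        finally show ?case .
      qed
      have claim2: "II g (Q \<inter> {x. lk k < g x}) \<le> ennreal ((1 - \<beta>) ^ k) * ennreal G" for k
      proof -
        define U where "U = (\<Union>N. Om N (lk k) g a h)"
        have ae: "AE x in lebesgue. x \<in> cube a h \<longrightarrow> lk k < g x \<longrightarrow> (\<exists>N. x \<in> Om N (lk k) g a h)"
          by (rule diff_Om[OF h]) (use lkpos in \<open>simp add: less_imp_le\<close>)
        have "II g (Q \<inter> {x. lk k < g x}) \<le> II g U"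
          unfolding II_def
          by (rule nn_integral_mono_AE) (use ae in \<open>eventually_elim, auto simp: U_def Q_def indicator_def\<close>)
        also have "\<dots> = (SUP N. II g (Om N (lk k) g a h))" unfolding U_def by (rule II_Un_Om[OF h])
        also have "\<dots> \<le> ennreal ((1 - \<beta>) ^ k) * ennreal G"
          by (rule SUP_least) (rule claim1)
        finally show ?thesis .
      qed
      have lkpow: "lk (Suc k) powr \<delta> = l0 powr \<delta> * M powr \<delta> * (M powr \<delta>) ^ k" for k
      proof -
        have "M powr (real (Suc k)) = M ^ Suc k" by (rule powr_realpow) (use M1 in simp)
        then have "lk (Suc k) = M powr (real (Suc k)) * l0" by (simp add: lk_def)
        then have "lk (Suc k) powr \<delta> = M powr (real (Suc k) * \<delta>) * l0 powr \<delta>"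
          by (simp add: powr_mult powr_powr)
        also have "M powr (real (Suc k) * \<delta>) = M powr \<delta> * (M powr \<delta>) powr (real k)"
        proof -
          have e: "real (Suc k) * \<delta> = \<delta> + \<delta> * real k" by (simp add: algebra_simps)
          have "M powr (real (Suc k) * \<delta>) = M powr \<delta> * M powr (\<delta> * real k)"
            unfolding e by (rule powr_add)
          also have "M powr (\<delta> * real k) = (M powr \<delta>) powr (real k)" by (simp add: powr_powr)
          finally show ?thesis .
        qed
        also have "(M powr \<delta>) powr (real k) = (M powr \<delta>) ^ k"
          using M1 by (simp add: powr_realpow)
        finally show ?thesis by simp
      qed
      define T where "T k x = ennreal (lk (Suc k) powr \<delta>) * (ennreal (g x) * indicator (Q \<inter> {y. lk k < g y}) x)" for k x
      have pw: "ennreal (g x powr (1 + \<delta>)) * indicator Q x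
          \<le> ennreal (l0 powr \<delta>) * (ennreal (g x) * indicator Q x) + (\<Sum>k. T k x)" for x
      proof (cases "x \<in> Q")
        case False
        then show ?thesis by simp
      next
        case xQ: True
        have gsplit: "g x powr (1 + \<delta>) = g x * g x powr \<delta>" using gnn[of x] by (simp add: powr_mult_base)
        show ?thesis
        proof (cases "g x \<le> l0")
          case True
          have "g x powr (1 + \<delta>) \<le> l0 powr \<delta> * g x"
            unfolding gsplit using True gnn[of x] \<delta>
            by (simp add: mult.commute mult_left_mono powr_mono2)
          then have "ennreal (g x powr (1 + \<delta>)) \<le> ennreal (l0 powr \<delta> * g x)"
            by (rule ennreal_leI)
          then have "ennreal (g x powr (1 + \<delta>)) \<le> ennreal (l0 powr \<delta>) * ennreal (g x)"
            by (simp add: ennreal_mult')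
          then show ?thesis using xQ by (simp add: add_increasing2)
        next
          case False
          have "\<exists>j. g x \<le> lk j"
          proof -
            obtain n where "g x / l0 < M ^ n" using real_arch_pow[OF M1] by blast
            then have "g x < lk n" using l0pos by (simp add: lk_def divide_less_eq mult.commute)
            then show ?thesis by (auto intro: less_imp_le)
          qed
          define j where "j = (LEAST j. g x \<le> lk j)"
          have j: "g x \<le> lk j" unfolding j_def using \<open>\<exists>j. g x \<le> lk j\<close> by (rule LeastI_ex)
          have j0: "j \<noteq> 0"
          proof
            assume "j = 0"
            with j False show False by (simp add: lk_def)
          qed
          then obtain k where k: "j = Suc k" by (cases j) auto
          have "\<not> g x \<le> lk k" unfolding j_def
            using not_less_Least[of k "\<lambda>j. g x \<le> lk j"] k j_def by auto
          then have gk: "lk k < g x" by simp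
          have gj: "g x \<le> lk (Suc k)" using j k by simp
          have "g x powr (1 + \<delta>) \<le> lk (Suc k) powr \<delta> * g x"
            unfolding gsplit using gj gnn[of x] \<delta>
            by (simp add: mult.commute mult_left_mono powr_mono2)
          then have "ennreal (g x powr (1 + \<delta>)) \<le> ennreal (lk (Suc k) powr \<delta> * g x)"
            by (rule ennreal_leI)
          also have "\<dots> = T k x"
            using xQ gk by (simp add: T_def ennreal_mult' indicator_def)
          also have "T k x \<le> (\<Sum>k. T k x)"
            using sum_le_suminf[of "\<lambda>k. T k x" "{k}"] by (simp add: summableI)
          finally show ?thesis using xQ by (simp add: add_increasing)
        qed
      qed
      have Tm: "(\<lambda>x. T k x) \<in> borel_measurable lebesgue" for k unfolding T_def by measurable
      have "(\<integral>\<^sup>+x\<in>Q. ennreal (g x powr (1 + \<delta>)) \<partial>lebesgue)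
          \<le> (\<integral>\<^sup>+x. ennreal (l0 powr \<delta>) * (ennreal (g x) * indicator Q x) + (\<Sum>k. T k x) \<partial>lebesgue)"
        by (rule nn_integral_mono) (rule pw)
      also have "\<dots> = ennreal (l0 powr \<delta>) * II g Q + (\<Sum>k. ennreal (lk (Suc k) powr \<delta>) * II g (Q \<inter> {y. lk k < g y}))"
      proof -
        have Sm: "(\<lambda>x. \<Sum>k. T k x) \<in> borel_measurable lebesgue"
          by (rule borel_measurable_suminf_order) (rule Tm)
        have "(\<integral>\<^sup>+x. ennreal (l0 powr \<delta>) * (ennreal (g x) * indicator Q x) + (\<Sum>k. T k x) \<partial>lebesgue)
            = (\<integral>\<^sup>+x. ennreal (l0 powr \<delta>) * (ennreal (g x) * indicator Q x) \<partial>lebesgue) + (\<integral>\<^sup>+x. (\<Sum>k. T k x) \<partial>lebesgue)"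
          by (rule nn_integral_add) (use Sm in auto)
        also have "(\<integral>\<^sup>+x. ennreal (l0 powr \<delta>) * (ennreal (g x) * indicator Q x) \<partial>lebesgue) = ennreal (l0 powr \<delta>) * II g Q"
          unfolding II_def by (rule nn_integral_cmult) auto
        also have "(\<integral>\<^sup>+x. (\<Sum>k. T k x) \<partial>lebesgue) = (\<Sum>k. \<integral>\<^sup>+x. T k x \<partial>lebesgue)"
          by (rule nn_integral_suminf) (rule Tm)
        also have "(\<lambda>k. \<integral>\<^sup>+x. T k x \<partial>lebesgue) = (\<lambda>k. ennreal (lk (Suc k) powr \<delta>) * II g (Q \<inter> {y. lk k < g y}))"
          unfolding T_def II_def by (rule ext, rule nn_integral_cmult) auto
        finally show ?thesis .
      qed
      also have "\<dots> \<le> ennreal (l0 powr \<delta>) * ennreal G + (\<Sum>k. ennreal (lk (Suc k) powr \<delta>) * (ennreal ((1 - \<beta>) ^ k) * ennreal G))"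
      proof (rule add_mono)
        show "ennreal (l0 powr \<delta>) * II g Q \<le> ennreal (l0 powr \<delta>) * ennreal G" using G by simp
        show "(\<Sum>k. ennreal (lk (Suc k) powr \<delta>) * II g (Q \<inter> {y. lk k < g y}))
            \<le> (\<Sum>k. ennreal (lk (Suc k) powr \<delta>) * (ennreal ((1 - \<beta>) ^ k) * ennreal G))"
          by (rule suminf_le) (auto intro: mult_left_mono claim2 summableI)
      qed
      also have "(\<Sum>k. ennreal (lk (Suc k) powr \<delta>) * (ennreal ((1 - \<beta>) ^ k) * ennreal G))
          = (\<Sum>k. ennreal (l0 powr \<delta> * M powr \<delta> * G * \<rho> ^ k))"
      proof (rule suminf_cong)
        fix k
        have "lk (Suc k) powr \<delta> * ((1 - \<beta>) ^ k * G) = l0 powr \<delta> * M powr \<delta> * G * ((M powr \<delta>) ^ k * (1 - \<beta>) ^ k)"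
          unfolding lkpow by (simp only: mult_ac)
        also have "(M powr \<delta>) ^ k * (1 - \<beta>) ^ k = \<rho> ^ k" unfolding \<rho>_def by (rule power_mult_distrib[symmetric])
        finally have e: "lk (Suc k) powr \<delta> * ((1 - \<beta>) ^ k * G) = l0 powr \<delta> * M powr \<delta> * G * \<rho> ^ k" .
        have "ennreal (lk (Suc k) powr \<delta>) * (ennreal ((1 - \<beta>) ^ k) * ennreal G) = ennreal (lk (Suc k) powr \<delta> * ((1 - \<beta>) ^ k * G))"
          using \<beta> G by (simp add: ennreal_mult')
        then show "ennreal (lk (Suc k) powr \<delta>) * (ennreal ((1 - \<beta>) ^ k) * ennreal G) = ennreal (l0 powr \<delta> * M powr \<delta> * G * \<rho> ^ k)"
          unfolding e .
      qed
      also have "\<dots> = ennreal (\<Sum>k. l0 powr \<delta> * M powr \<delta> * G * \<rho> ^ k)"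
        by (rule suminf_ennreal2) (use \<rho>0 \<rho>1 G in \<open>auto intro!: summable_mult summable_geometric\<close>)
      also have "(\<Sum>k. l0 powr \<delta> * M powr \<delta> * G * \<rho> ^ k) = l0 powr \<delta> * M powr \<delta> * G * (1 / (1 - \<rho>))"
      proof -
        have "(\<Sum>k. l0 powr \<delta> * M powr \<delta> * G * \<rho> ^ k) = l0 powr \<delta> * M powr \<delta> * G * (\<Sum>k. \<rho> ^ k)"
          by (rule suminf_mult) (use \<rho>0 \<rho>1 in simp)
        also have "(\<Sum>k. \<rho> ^ k) = 1 / (1 - \<rho>)" by (rule suminf_geometric) (use \<rho>0 \<rho>1 in simp)
        finally show ?thesis .
      qed
      also have "ennreal (l0 powr \<delta>) * ennreal G + ennreal (l0 powr \<delta> * M powr \<delta> * G * (1 / (1 - \<rho>)))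
          = ennreal (l0 powr \<delta> * G * K)"
      proof -
        have "ennreal (l0 powr \<delta>) * ennreal G = ennreal (l0 powr \<delta> * G)" by (simp add: ennreal_mult')
        moreover have "l0 powr \<delta> * G + l0 powr \<delta> * M powr \<delta> * G * (1 / (1 - \<rho>)) = l0 powr \<delta> * G * K"
          by (simp add: K_def distrib_left)
        moreover have "0 \<le> l0 powr \<delta> * M powr \<delta> * G * (1 / (1 - \<rho>))" using G \<rho>1 by simp
        ultimately show ?thesis using G by (metis ennreal_plus powr_ge_zero zero_le_mult_iff)
      qed
      also have "l0 powr \<delta> * G * K = K * h ^ DIM('a) * avg (cube a h) g powr (1 + \<delta>)"
      proof -
        have "G = L * l0" using L0 by (simp add: l0_def)
        moreover have "avg (cube a h) g = l0" using G by (simp add: Q_def l0_def)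
        moreover have "l0 powr (1 + \<delta>) = l0 * l0 powr \<delta>" using l0pos by (simp add: powr_mult_base)
        ultimately show ?thesis by (simp add: L_def mult_ac)
      qed
      finally show ?thesis by (simp add: Q_def)
    qed
  qed
qed

end

lemma ennreal_le_fin_L:
  assumes "x \<le> ennreal (L * B)" "0 < L" "0 \<le> B"
  obtains A where "x = ennreal (L * A)" "0 \<le> A" "A \<le> B"
proof -
  obtain s where s: "x = ennreal s" "0 \<le> s" "s \<le> L * B"
    using assms(1) by (rule ennreal_le_fin) (use assms in simp)
  define A where "A = s / L"
  have "x = ennreal (L * A)" "0 \<le> A" "A \<le> B"
    using s assms by (auto simp: A_def field_simps)
  then show ?thesis by (rule that)
qed

lemma holder_avg:
  fixes f g :: "'a \<Rightarrow> real"
  assumes f[measurable]: "f \<in> borel_measurable M" and g[measurable]: "g \<in> borel_measurable M"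
    and fnn: "\<And>x. 0 \<le> f x" and gnn: "\<And>x. 0 \<le> g x"
    and E[measurable]: "E \<in> sets M" and L: "0 < L"
    and p: "1 < p" and q: "q = p/(p-1)"
    and A: "(\<integral>\<^sup>+x\<in>E. ennreal (f x powr p) \<partial>M) = ennreal (L * A)" "0 \<le> A"
    and B: "(\<integral>\<^sup>+x\<in>E. ennreal (g x powr q) \<partial>M) = ennreal (L * B)" "0 \<le> B"
  shows "(\<integral>\<^sup>+x\<in>E. ennreal (f x * g x) \<partial>M) \<le> ennreal (L * (A powr (1/p) * B powr (1/q)))"
proof -
  have pq: "1/p + 1/q = 1" using p unfolding q by (simp add: field_simps)
  have "(\<integral>\<^sup>+x\<in>E. ennreal (f x * g x) \<partial>M) \<le> ennreal ((L * A) powr (1/p) * (L * B) powr (1/q))"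
    by (rule holder_set[OF f g fnn gnn E p q A(1) _ B(1)]) (use L A B in auto)
  also have "(L * A) powr (1/p) * (L * B) powr (1/q) = L powr (1/p + 1/q) * (A powr (1/p) * B powr (1/q))"
    by (simp add: powr_mult powr_add)
  also have "\<dots> = L * (A powr (1/p) * B powr (1/q))" using pq L by simp
  finally show ?thesis .
qed

lemma jensen_avg:
  fixes f :: "'a \<Rightarrow> real"
  assumes f[measurable]: "f \<in> borel_measurable M" and fnn: "\<And>x. 0 \<le> f x"
    and E[measurable]: "E \<in> sets M" and \<gamma>: "0 < \<gamma>" "\<gamma> < 1" and L: "0 < L"
    and F: "(\<integral>\<^sup>+x\<in>E. ennreal (f x) \<partial>M) = ennreal (L * F)" "0 \<le> F"
    and Lm: "emeasure M E = ennreal L"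
  shows "(\<integral>\<^sup>+x\<in>E. ennreal (f x powr \<gamma>) \<partial>M) \<le> ennreal (L * F powr \<gamma>)"
proof -
  have "(\<integral>\<^sup>+x\<in>E. ennreal (f x powr \<gamma>) \<partial>M) \<le> ennreal ((L * F) powr \<gamma> * L powr (1 - \<gamma>))"
    by (rule jensen_set[OF f fnn E \<gamma> F(1) _ Lm]) (use L F in auto)
  also have "(L * F) powr \<gamma> * L powr (1 - \<gamma>) = (L powr \<gamma> * L powr (1 - \<gamma>)) * F powr \<gamma>"
    by (simp add: powr_mult mult_ac)
  also have "L powr \<gamma> * L powr (1 - \<gamma>) = L powr (\<gamma> + (1 - \<gamma>))" by (rule powr_add[symmetric])
  also have "\<dots> = L" using L by simp
  finally show ?thesis .
qed

lemma A_weight_RH: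
  fixes w :: "'a::euclidean_space \<Rightarrow> real"
  assumes Aw: "A_weight t w" and t: "1 < t"
  obtains \<delta> K where "0 < \<delta>" "0 \<le> K"
    "\<And>a h. 0 < h \<Longrightarrow> (\<integral>\<^sup>+x\<in>cube a h. ennreal (w x powr (1 + \<delta>)) \<partial>lebesgue)
        \<le> ennreal (K * h ^ DIM('a) * avg (cube a h) w powr (1 + \<delta>))"
proof -
  interpret locint w
    by standard (use A_weightD[OF Aw] in \<open>auto simp: II_def\<close>)
  obtain \<beta> where \<beta>: "0 < \<beta>" "\<beta> < 1"
    and ainf: "\<And>c l F. 0 < l \<Longrightarrow> F \<in> sets lebesgue \<Longrightarrow> F \<subseteq> cube c l \<Longrightarrow>
       emeasure lebesgue F \<le> ennreal (l ^ DIM('a) / 2) \<Longrightarrow>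
       (\<integral>\<^sup>+x\<in>F. ennreal (w x) \<partial>lebesgue) \<le> ennreal (1 - \<beta>) * (\<integral>\<^sup>+x\<in>cube c l. ennreal (w x) \<partial>lebesgue)"
    using Ainf_half[OF Aw t] by blast
  show ?thesis
    by (rule RH[OF \<beta>, of thesis]) (use ainf that in \<open>auto simp: II_def\<close>)
qed

lemma avg_nonneg: "0 \<le> avg Q f"
  by (simp add: avg_def)

lemma A_weight_dual:
  fixes w :: "'a::euclidean_space \<Rightarrow> real"
  assumes Aw: "A_weight t w" and t: "1 < t"
  shows "A_weight (t / (t - 1)) (\<lambda>x. w x powr (-1/(t-1)))"
proof -
  note wm[measurable] = A_weightD(1)[OF Aw]
  note wnn = A_weightD(2)[OF Aw]
  obtain C where C: "\<And>a h. h > 0 \<Longrightarrow>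
        avg (cube a h) w * avg (cube a h) (\<lambda>x. w x powr (-1/(t-1))) powr (t-1) \<le> C"
    using A_weightD(6)[OF Aw] by blast
  have e1: "-1 / (t / (t - 1) - 1) = -(t-1)" using t by (simp add: field_simps)
  have e2: "(w x powr (-1/(t-1))) powr (-(t-1)) = w x" for x
  proof -
    have "(-1/(t-1)) * (-(t-1)) = 1" using t by (simp add: field_simps)
    then show ?thesis using wnn[of x] by (simp add: powr_powr)
  qed
  show ?thesis
    unfolding A_weight_def e1 e2
  proof (intro conjI allI impI)
    show "(\<lambda>x. w x powr (-1/(t-1))) \<in> borel_measurable lebesgue" by measurable
    show "0 \<le> w x powr (-1/(t-1))" for x by simp
    show "AE x in lebesgue. 0 < w x powr (-1/(t-1))"
      using A_weightD(3)[OF Aw] by eventually_elim simp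
    show "(\<integral>\<^sup>+ x\<in>cube a h. ennreal (w x powr (-1/(t-1))) \<partial>lebesgue) \<noteq> \<infinity>" if "0 < h" for a h
      using A_weightD(5)[OF Aw that] by simp
    show "(\<integral>\<^sup>+ x\<in>cube a h. ennreal (w x) \<partial>lebesgue) \<noteq> \<infinity>" if "0 < h" for a h
      using A_weightD(4)[OF Aw that] by simp
    show "\<exists>C'. \<forall>a h. 0 < h \<longrightarrow> avg (cube a h) (\<lambda>x. w x powr (-1/(t-1))) * avg (cube a h) w powr (t / (t - 1) - 1) \<le> C'"
    proof (intro exI allI impI)
      fix a :: 'a and h :: real assume h: "0 < h"
      define A where "A = avg (cube a h) w"
      define S where "S = avg (cube a h) (\<lambda>x. w x powr (-1/(t-1)))"
      have A0: "0 \<le> A" and S0: "0 \<le> S" by (simp_all add: A_def S_def avg_nonneg)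
      have "A * S powr (t-1) \<le> C" using C[OF h] by (simp add: A_def S_def)
      then have "(A * S powr (t-1)) powr (1/(t-1)) \<le> (max C 0) powr (1/(t-1))"
        using A0 S0 t by (intro powr_mono2) auto
      moreover have "(A * S powr (t-1)) powr (1/(t-1)) = S * A powr (t / (t - 1) - 1)"
      proof -
        have "t / (t - 1) - 1 = 1/(t-1)" using t by (simp add: field_simps)
        then show ?thesis using t S0 by (simp add: powr_mult powr_powr mult.commute)
      qed
      ultimately show "S * A powr (t / (t - 1) - 1) \<le> (max C 0) powr (1/(t-1))" by simp
    qed
  qed
qed

lemma cube_avg_real:
  fixes a :: "'a::euclidean_space"
  assumes h: "0 < h" and fin: "(\<integral>\<^sup>+x\<in>cube a h. ennreal (f x) \<partial>lebesgue) \<noteq> \<infinity>"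
  shows "(\<integral>\<^sup>+x\<in>cube a h. ennreal (f x) \<partial>lebesgue) = ennreal (h ^ DIM('a) * avg (cube a h) f)"
proof -
  obtain r where r: "(\<integral>\<^sup>+x\<in>cube a h. ennreal (f x) \<partial>lebesgue) = ennreal r" "0 \<le> r"
    using fin by (rule fin_real)
  then have "avg (cube a h) f = r / h ^ DIM('a)" using h by (intro avg_cube) auto
  then show ?thesis using r h by simp
qed

lemma avg_of_real:
  fixes a :: "'a::euclidean_space"
  assumes h: "0 < h" and "(\<integral>\<^sup>+x\<in>cube a h. ennreal (f x) \<partial>lebesgue) = ennreal (h ^ DIM('a) * A)" "0 \<le> A"
  shows "avg (cube a h) f = A"
proof -
  have "avg (cube a h) f = (h ^ DIM('a) * A) / h ^ DIM('a)" using assms by (intro avg_cube) auto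
  then show ?thesis using h by simp
qed

lemma powr_mult3: "0 \<le> a \<Longrightarrow> 0 \<le> b \<Longrightarrow> (a * b) powr p = a powr p * b powr p" for a b :: real
  by (rule powr_mult)

lemma comb:
  fixes w v :: "'a::euclidean_space \<Rightarrow> real"
  assumes Aw: "A_weight P w" and P: "1 < P" and Av: "A_weight Qv v" and Qv: "1 < Qv"
    and d1: "0 < \<delta>1" "0 \<le> K1"
    and RHw: "\<And>a h. 0 < h \<Longrightarrow> (\<integral>\<^sup>+x\<in>cube a h. ennreal (w x powr (1 + \<delta>1)) \<partial>lebesgue)
        \<le> ennreal (K1 * h ^ DIM('a) * avg (cube a h) w powr (1 + \<delta>1))"
    and d2: "0 < \<delta>2" "0 \<le> K2"
    and RHs: "\<And>a h. 0 < h \<Longrightarrow> (\<integral>\<^sup>+x\<in>cube a h. ennreal ((w x powr (-1/(P-1))) powr (1 + \<delta>2)) \<partial>lebesgue)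
        \<le> ennreal (K2 * h ^ DIM('a) * avg (cube a h) (\<lambda>x. w x powr (-1/(P-1))) powr (1 + \<delta>2))"
    and \<epsilon>: "0 < \<epsilon>" and P': "1 < P'"
    and x1: "1 < x" and xdef: "x = (1 + \<delta>1) / (1 + \<epsilon>)"
    and g1: "0 < \<gamma>1" "\<gamma>1 < 1" and g1def: "\<gamma>1 = \<epsilon> * (x / (x - 1)) * (Qv - 1)"
    and rdef: "\<rho> = (1 + \<epsilon>) * (P - 1) / (P' - 1)"
    and y1: "1 < y" and ydef: "y = (1 + \<delta>2) / \<rho>"
    and g2: "0 < \<gamma>2" "\<gamma>2 < 1" and g2def: "\<gamma>2 = \<epsilon> * (y / (y - 1)) / (P' - 1)"
  shows "A_weight P' (\<lambda>z. w z powr (1 + \<epsilon>) * v z powr (-\<epsilon>))"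
proof -
  note wm[measurable] = A_weightD(1)[OF Aw]
  note wnn = A_weightD(2)[OF Aw]
  note vm[measurable] = A_weightD(1)[OF Av]
  note vnn = A_weightD(2)[OF Av]
  obtain Cw where Cw: "\<And>a h. h > 0 \<Longrightarrow>
        avg (cube a h) w * avg (cube a h) (\<lambda>x. w x powr (-1/(P-1))) powr (P-1) \<le> Cw"
    using A_weightD(6)[OF Aw] by blast
  obtain Cv where Cv: "\<And>a h. h > 0 \<Longrightarrow>
        avg (cube a h) v * avg (cube a h) (\<lambda>x. v x powr (-1/(Qv-1))) powr (Qv-1) \<le> Cv"
    using A_weightD(6)[OF Av] by blast
  define u where "u z = w z powr (1 + \<epsilon>) * v z powr (-\<epsilon>)" for z
  define \<tau> where "\<tau> = -1 / (P' - 1)"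
  define x' where "x' = x / (x - 1)"
  define y' where "y' = y / (y - 1)"
  have \<rho>0: "0 < \<rho>" using \<epsilon> P P' by (simp add: rdef)
  have um[measurable]: "u \<in> borel_measurable lebesgue" unfolding u_def by measurable
  have unn: "0 \<le> u z" for z by (simp add: u_def)
  have E1: "(w z powr (1 + \<epsilon>)) powr x = w z powr (1 + \<delta>1)" for z
  proof -
    have "(1 + \<epsilon>) * x = 1 + \<delta>1" using \<epsilon> by (simp add: xdef)
    then show ?thesis by (simp add: powr_powr)
  qed
  have E2: "(v z powr (-\<epsilon>)) powr x' = (v z powr (-1/(Qv-1))) powr \<gamma>1" for z
  proof -
    have g1': "\<gamma>1 = \<epsilon> * x' * (Qv - 1)" by (simp add: g1def x'_def)
    have "-\<epsilon> * x' = (-1/(Qv-1)) * \<gamma>1" using Qv unfolding g1' by simp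
    then show ?thesis by (simp add: powr_powr)
  qed
  have E3: "u z powr \<tau> = (w z powr (-1/(P-1))) powr \<rho> * v z powr (\<epsilon> / (P' - 1))" for z
  proof -
    have pp: "P - 1 \<noteq> 0" using P by auto
    have a: "(1 + \<epsilon>) * \<tau> = (-1/(P-1)) * \<rho>" unfolding rdef \<tau>_def
      using pp by (simp add: divide_simps)
    have b: "-\<epsilon> * \<tau> = \<epsilon> / (P' - 1)" by (simp add: \<tau>_def)
    show ?thesis unfolding u_def by (simp only: powr_mult powr_powr a b)
  qed
  have E4: "((w z powr (-1/(P-1))) powr \<rho>) powr y = (w z powr (-1/(P-1))) powr (1 + \<delta>2)" for z
  proof -
    have "\<rho> * y = 1 + \<delta>2" using \<rho>0 by (simp add: ydef)
    then show ?thesis by (simp add: powr_powr)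
  qed
  have E5: "(v z powr (\<epsilon> / (P' - 1))) powr y' = v z powr \<gamma>2" for z
  proof -
    have "\<epsilon> / (P' - 1) * y' = \<gamma>2" by (simp add: g2def y'_def)
    then show ?thesis by (simp add: powr_powr)
  qed
  have x'def: "x' = x / (x - 1)" by (simp add: x'_def)
  have y'def: "y' = y / (y - 1)" by (simp add: y'_def)
  define Kc where "Kc = K1 powr (1/x) * K2 powr ((P' - 1) / y) * (max Cw 0) powr (1 + \<epsilon>) * (max Cv 0) powr \<epsilon>"
  have main: "(\<integral>\<^sup>+z\<in>cube a h. ennreal (u z) \<partial>lebesgue) \<noteq> \<infinity> \<and>
      (\<integral>\<^sup>+z\<in>cube a h. ennreal (u z powr \<tau>) \<partial>lebesgue) \<noteq> \<infinity> \<and>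
      avg (cube a h) u * avg (cube a h) (\<lambda>z. u z powr \<tau>) powr (P' - 1) \<le> Kc" if h: "0 < h" for a h
  proof -
    define Q where "Q = cube a h"
    define L where "L = h ^ DIM('a)"
    have L0: "0 < L" using h by (simp add: L_def)
    have Qm[measurable]: "Q \<in> sets lebesgue" by (simp add: Q_def)
    have emQ: "emeasure lebesgue Q = ennreal L" unfolding Q_def L_def by (rule emeasure_cube) (use h in simp)
    define aw where "aw = avg Q w"
    define as where "as = avg Q (\<lambda>x. w x powr (-1/(P-1)))"
    define av where "av = avg Q v"
    define asv where "asv = avg Q (\<lambda>x. v x powr (-1/(Qv-1)))"
    have aw0: "0 \<le> aw" and as0: "0 \<le> as" and av0: "0 \<le> av" and asv0: "0 \<le> asv"
      by (simp_all add: aw_def as_def av_def asv_def avg_nonneg)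
    have Iw: "(\<integral>\<^sup>+x\<in>Q. ennreal (w x) \<partial>lebesgue) = ennreal (L * aw)"
      unfolding Q_def L_def aw_def by (rule cube_avg_real[OF h A_weightD(4)[OF Aw h]])
    have Is: "(\<integral>\<^sup>+x\<in>Q. ennreal (w x powr (-1/(P-1))) \<partial>lebesgue) = ennreal (L * as)"
      unfolding Q_def L_def as_def by (rule cube_avg_real[OF h A_weightD(5)[OF Aw h]])
    have Iv: "(\<integral>\<^sup>+x\<in>Q. ennreal (v x) \<partial>lebesgue) = ennreal (L * av)"
      unfolding Q_def L_def av_def by (rule cube_avg_real[OF h A_weightD(4)[OF Av h]])
    have Isv: "(\<integral>\<^sup>+x\<in>Q. ennreal (v x powr (-1/(Qv-1))) \<partial>lebesgue) = ennreal (L * asv)"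
      unfolding Q_def L_def asv_def by (rule cube_avg_real[OF h A_weightD(5)[OF Av h]])
    have "(\<integral>\<^sup>+x\<in>Q. ennreal (w x powr (1 + \<delta>1)) \<partial>lebesgue) \<le> ennreal (L * (K1 * aw powr (1 + \<delta>1)))"
      using RHw[OF h, of a] by (simp add: Q_def L_def aw_def mult_ac)
    then obtain A1 where A1: "(\<integral>\<^sup>+x\<in>Q. ennreal (w x powr (1 + \<delta>1)) \<partial>lebesgue) = ennreal (L * A1)"
        "0 \<le> A1" "A1 \<le> K1 * aw powr (1 + \<delta>1)"
      by (rule ennreal_le_fin_L) (use L0 d1 in auto)
    have "(\<integral>\<^sup>+x\<in>Q. ennreal ((v x powr (-1/(Qv-1))) powr \<gamma>1) \<partial>lebesgue) \<le> ennreal (L * asv powr \<gamma>1)"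
      by (rule jensen_avg[OF _ _ Qm g1 L0 Isv asv0 emQ]) auto
    then obtain B1 where B1: "(\<integral>\<^sup>+x\<in>Q. ennreal ((v x powr (-1/(Qv-1))) powr \<gamma>1) \<partial>lebesgue) = ennreal (L * B1)"
        "0 \<le> B1" "B1 \<le> asv powr \<gamma>1"
      by (rule ennreal_le_fin_L) (use L0 in auto)
    have "(\<integral>\<^sup>+z\<in>Q. ennreal (w z powr (1 + \<epsilon>) * v z powr (-\<epsilon>)) \<partial>lebesgue) \<le> ennreal (L * (A1 powr (1/x) * B1 powr (1/x')))"
    proof (rule holder_avg[OF _ _ _ _ Qm L0 x1 x'def _ A1(2) _ B1(2)])
      show "(\<integral>\<^sup>+z\<in>Q. ennreal ((w z powr (1 + \<epsilon>)) powr x) \<partial>lebesgue) = ennreal (L * A1)"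
        unfolding E1 by (rule A1(1))
      show "(\<integral>\<^sup>+z\<in>Q. ennreal ((v z powr (-\<epsilon>)) powr x') \<partial>lebesgue) = ennreal (L * B1)"
        unfolding E2 by (rule B1(1))
    qed auto
    then obtain au where au: "(\<integral>\<^sup>+z\<in>Q. ennreal (u z) \<partial>lebesgue) = ennreal (L * au)" "0 \<le> au"
        "au \<le> A1 powr (1/x) * B1 powr (1/x')"
      unfolding u_def by (rule ennreal_le_fin_L) (use L0 in auto)
    have "(\<integral>\<^sup>+x\<in>Q. ennreal ((w x powr (-1/(P-1))) powr (1 + \<delta>2)) \<partial>lebesgue) \<le> ennreal (L * (K2 * as powr (1 + \<delta>2)))"
      using RHs[OF h, of a] by (simp add: Q_def L_def as_def mult_ac)
    then obtain A2 where A2: "(\<integral>\<^sup>+x\<in>Q. ennreal ((w x powr (-1/(P-1))) powr (1 + \<delta>2)) \<partial>lebesgue) = ennreal (L * A2)"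
        "0 \<le> A2" "A2 \<le> K2 * as powr (1 + \<delta>2)"
      by (rule ennreal_le_fin_L) (use L0 d2 in auto)
    have "(\<integral>\<^sup>+x\<in>Q. ennreal (v x powr \<gamma>2) \<partial>lebesgue) \<le> ennreal (L * av powr \<gamma>2)"
      by (rule jensen_avg[OF _ _ Qm g2 L0 Iv av0 emQ]) (use vnn in auto)
    then obtain B2 where B2: "(\<integral>\<^sup>+x\<in>Q. ennreal (v x powr \<gamma>2) \<partial>lebesgue) = ennreal (L * B2)"
        "0 \<le> B2" "B2 \<le> av powr \<gamma>2"
      by (rule ennreal_le_fin_L) (use L0 in auto)
    have "(\<integral>\<^sup>+z\<in>Q. ennreal ((w z powr (-1/(P-1))) powr \<rho> * v z powr (\<epsilon> / (P' - 1))) \<partial>lebesgue)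
        \<le> ennreal (L * (A2 powr (1/y) * B2 powr (1/y')))"
    proof (rule holder_avg[OF _ _ _ _ Qm L0 y1 y'def _ A2(2) _ B2(2)])
      show "(\<integral>\<^sup>+x\<in>Q. ennreal (((w x powr (-1/(P-1))) powr \<rho>) powr y) \<partial>lebesgue) = ennreal (L * A2)"
        unfolding E4 by (rule A2(1))
      show "(\<integral>\<^sup>+x\<in>Q. ennreal ((v x powr (\<epsilon> / (P' - 1))) powr y') \<partial>lebesgue) = ennreal (L * B2)"
        unfolding E5 by (rule B2(1))
    qed auto
    then obtain aT where aT: "(\<integral>\<^sup>+z\<in>Q. ennreal (u z powr \<tau>) \<partial>lebesgue) = ennreal (L * aT)" "0 \<le> aT"
        "aT \<le> A2 powr (1/y) * B2 powr (1/y')"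
      unfolding E3 by (rule ennreal_le_fin_L) (use L0 in auto)
    have avu: "avg (cube a h) u = au"
      by (rule avg_of_real[OF h]) (use au in \<open>auto simp: Q_def L_def\<close>)
    have avt: "avg (cube a h) (\<lambda>z. u z powr \<tau>) = aT"
      by (rule avg_of_real[OF h]) (use aT in \<open>auto simp: Q_def L_def\<close>)
    have xpos: "0 < x" "0 < x'" using x1 by (auto simp: x'_def)
    have ypos: "0 < y" "0 < y'" using y1 by (auto simp: y'_def)
    have b1: "au \<le> K1 powr (1/x) * aw powr (1 + \<epsilon>) * asv powr (\<epsilon> * (Qv - 1))"
    proof -
      have "A1 powr (1/x) \<le> (K1 * aw powr (1 + \<delta>1)) powr (1/x)"
        using A1 xpos by (intro powr_mono2) auto
      also have "\<dots> = K1 powr (1/x) * aw powr (1 + \<epsilon>)"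
      proof -
        have "(1 + \<delta>1) * (1/x) = 1 + \<epsilon>" using \<epsilon> d1 by (simp add: xdef)
        then show ?thesis using d1 aw0 by (simp add: powr_mult powr_powr)
      qed
      finally have t1: "A1 powr (1/x) \<le> K1 powr (1/x) * aw powr (1 + \<epsilon>)" .
      have "B1 powr (1/x') \<le> (asv powr \<gamma>1) powr (1/x')"
        using B1 xpos by (intro powr_mono2) auto
      also have "\<dots> = asv powr (\<epsilon> * (Qv - 1))"
      proof -
        have g1': "\<gamma>1 = \<epsilon> * x' * (Qv - 1)" by (simp add: g1def x'_def)
        have "\<gamma>1 * (1/x') = \<epsilon> * (Qv - 1)" using xpos(2) unfolding g1' by simp
        then show ?thesis by (simp add: powr_powr)
      qed
      finally have t2: "B1 powr (1/x') \<le> asv powr (\<epsilon> * (Qv - 1))" .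
      have "A1 powr (1/x) * B1 powr (1/x') \<le> (K1 powr (1/x) * aw powr (1 + \<epsilon>)) * asv powr (\<epsilon> * (Qv - 1))"
        using t1 t2 by (intro mult_mono) auto
      then show ?thesis using au by simp
    qed
    have b2: "aT powr (P' - 1) \<le> K2 powr ((P' - 1) / y) * as powr ((1 + \<epsilon>) * (P - 1)) * av powr \<epsilon>"
    proof -
      have "A2 powr (1/y) \<le> (K2 * as powr (1 + \<delta>2)) powr (1/y)"
        using A2 ypos by (intro powr_mono2) auto
      also have "\<dots> = K2 powr (1/y) * as powr \<rho>"
      proof -
        have "(1 + \<delta>2) * (1/y) = \<rho>" using \<rho>0 d2 by (simp add: ydef)
        then show ?thesis using d2 as0 by (simp add: powr_mult powr_powr)
      qed
      finally have t1: "A2 powr (1/y) \<le> K2 powr (1/y) * as powr \<rho>" .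
      have "B2 powr (1/y') \<le> (av powr \<gamma>2) powr (1/y')"
        using B2 ypos by (intro powr_mono2) auto
      also have "\<dots> = av powr (\<epsilon> / (P' - 1))"
      proof -
        have g2': "\<gamma>2 = \<epsilon> * y' / (P' - 1)" by (simp add: g2def y'_def)
        have "\<gamma>2 * (1/y') = \<epsilon> / (P' - 1)" using ypos(2) unfolding g2' by simp
        then show ?thesis by (simp add: powr_powr)
      qed
      finally have t2: "B2 powr (1/y') \<le> av powr (\<epsilon> / (P' - 1))" .
      have "aT \<le> (K2 powr (1/y) * as powr \<rho>) * av powr (\<epsilon> / (P' - 1))"
        using aT t1 t2 by (smt (verit) mult_mono powr_ge_zero)
      then have "aT powr (P' - 1) \<le> ((K2 powr (1/y) * as powr \<rho>) * av powr (\<epsilon> / (P' - 1))) powr (P' - 1)"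
        using aT P' by (intro powr_mono2) auto
      also have "\<dots> = K2 powr ((P' - 1) / y) * as powr ((1 + \<epsilon>) * (P - 1)) * av powr \<epsilon>"
      proof -
        have r: "\<rho> * (P' - 1) = (1 + \<epsilon>) * (P - 1)" using P' by (simp add: rdef)
        have e: "\<epsilon> / (P' - 1) * (P' - 1) = \<epsilon>" using P' by simp
        have k: "1 / y * (P' - 1) = (P' - 1) / y" by simp
        have "((K2 powr (1/y) * as powr \<rho>) * av powr (\<epsilon> / (P' - 1))) powr (P' - 1)
            = K2 powr (1 / y * (P' - 1)) * as powr (\<rho> * (P' - 1)) * av powr (\<epsilon> / (P' - 1) * (P' - 1))"
          by (simp only: powr_mult powr_powr)
        then show ?thesis unfolding r e k .
      qed
      finally show ?thesis .
    qed
    have "au * aT powr (P' - 1) \<le> (K1 powr (1/x) * aw powr (1 + \<epsilon>) * asv powr (\<epsilon> * (Qv - 1)))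
        * (K2 powr ((P' - 1) / y) * as powr ((1 + \<epsilon>) * (P - 1)) * av powr \<epsilon>)"
      using b1 b2 au by (intro mult_mono) auto
    also have "\<dots> = K1 powr (1/x) * K2 powr ((P' - 1) / y) * (aw * as powr (P - 1)) powr (1 + \<epsilon>) * (av * asv powr (Qv - 1)) powr \<epsilon>"
      by (simp add: powr_mult powr_powr mult_ac)
    also have "\<dots> \<le> Kc"
    proof -
      have c1: "aw * as powr (P - 1) \<le> max Cw 0" using Cw[OF h, of a] by (simp add: aw_def as_def Q_def)
      have c2: "av * asv powr (Qv - 1) \<le> max Cv 0" using Cv[OF h, of a] by (simp add: av_def asv_def Q_def)
      have "(aw * as powr (P - 1)) powr (1 + \<epsilon>) \<le> (max Cw 0) powr (1 + \<epsilon>)"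
        using c1 aw0 \<epsilon> by (intro powr_mono2) auto
      moreover have "(av * asv powr (Qv - 1)) powr \<epsilon> \<le> (max Cv 0) powr \<epsilon>"
        using c2 av0 \<epsilon> by (intro powr_mono2) auto
      ultimately show ?thesis unfolding Kc_def
        by (intro mult_mono mult_left_mono) auto
    qed
    finally have "au * aT powr (P' - 1) \<le> Kc" .
    then show ?thesis using au aT avu avt by (simp add: Q_def)
  qed
  show ?thesis
    unfolding A_weight_def u_def[symmetric] \<tau>_def[symmetric]
  proof (intro conjI allI impI)
    show "u \<in> borel_measurable lebesgue" by (rule um)
    show "0 \<le> u z" for z by (rule unn)
    show "AE x in lebesgue. 0 < u x"
      using A_weightD(3)[OF Aw] A_weightD(3)[OF Av] by eventually_elim (simp add: u_def)
    show "(\<integral>\<^sup>+z\<in>cube a h. ennreal (u z) \<partial>lebesgue) \<noteq> \<infinity>" if "0 < h" for a h using main[OF that] by blast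
    show "(\<integral>\<^sup>+z\<in>cube a h. ennreal (u z powr \<tau>) \<partial>lebesgue) \<noteq> \<infinity>" if "0 < h" for a h using main[OF that] by blast
    show "\<exists>C. \<forall>a h. 0 < h \<longrightarrow> avg (cube a h) u * avg (cube a h) (\<lambda>z. u z powr \<tau>) powr (P' - 1) \<le> C"
      using main by blast
  qed
qed

lemma ev_j:
  fixes s r q d1 d2 :: real
  assumes s: "0 < s" and sr: "s < r" and sq: "s < q" and d1: "0 < d1" and d2: "0 < d2"
  shows "eventually (\<lambda>\<theta>.
     0 < 1/r - \<theta> * (1/q) \<and>
     s < (1 - \<theta>) / (1/r - \<theta> * (1/q)) \<and>
     1 < (1 + d1) / (1 + \<theta> * (1/q) / (1/r - \<theta> * (1/q))) \<and>
     (\<theta> * (1/q) / (1/r - \<theta> * (1/q))) * (((1 + d1) / (1 + \<theta> * (1/q) / (1/r - \<theta> * (1/q))))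
        / ((1 + d1) / (1 + \<theta> * (1/q) / (1/r - \<theta> * (1/q))) - 1)) * (q/s - 1) < 1 \<and>
     1 < (1 + d2) / ((1 + \<theta> * (1/q) / (1/r - \<theta> * (1/q))) * (r/s - 1) / ((1 - \<theta>) / (1/r - \<theta> * (1/q)) / s - 1)) \<and>
     (\<theta> * (1/q) / (1/r - \<theta> * (1/q))) *
       (((1 + d2) / ((1 + \<theta> * (1/q) / (1/r - \<theta> * (1/q))) * (r/s - 1) / ((1 - \<theta>) / (1/r - \<theta> * (1/q)) / s - 1)))
        / ((1 + d2) / ((1 + \<theta> * (1/q) / (1/r - \<theta> * (1/q))) * (r/s - 1) / ((1 - \<theta>) / (1/r - \<theta> * (1/q)) / s - 1)) - 1))
       / ((1 - \<theta>) / (1/r - \<theta> * (1/q)) / s - 1) < 1) (at_right 0)"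
proof -
  define a where "a = 1/r"
  define b where "b = 1/q"
  have r0: "0 < r" and q0: "0 < q" using s sr sq by auto
  have a0: "0 < a" using r0 by (simp add: a_def)
  define D where "D \<theta> = a - \<theta> * b" for \<theta> :: real
  define E where "E \<theta> = \<theta> * b / D \<theta>" for \<theta>
  define p where "p \<theta> = (1 - \<theta>) / D \<theta>" for \<theta>
  define x where "x \<theta> = (1 + d1) / (1 + E \<theta>)" for \<theta>
  define P' where "P' \<theta> = p \<theta> / s" for \<theta>
  define \<rho> where "\<rho> \<theta> = (1 + E \<theta>) * (r/s - 1) / (P' \<theta> - 1)" for \<theta>
  define y where "y \<theta> = (1 + d2) / \<rho> \<theta>" for \<theta>
  have P1: "0 < r/s - 1" using s sr by simp
  have LD: "(D \<longlongrightarrow> a) (at_right 0)" unfolding D_def by (auto intro!: tendsto_eq_intros)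
  have LE: "(E \<longlongrightarrow> 0) (at_right 0)" unfolding E_def using LD a0 by (auto intro!: tendsto_eq_intros)
  have Lp: "(p \<longlongrightarrow> r) (at_right 0)" unfolding p_def using LD a0 by (auto intro!: tendsto_eq_intros simp: a_def)
  have Lx: "(x \<longlongrightarrow> 1 + d1) (at_right 0)" unfolding x_def using LE d1 by (auto intro!: tendsto_eq_intros)
  have Lg1: "((\<lambda>\<theta>. E \<theta> * (x \<theta> / (x \<theta> - 1)) * (q/s - 1)) \<longlongrightarrow> 0) (at_right 0)"
    using LE Lx d1 by (auto intro!: tendsto_eq_intros)
  have LP': "(P' \<longlongrightarrow> r/s) (at_right 0)" unfolding P'_def using Lp s by (auto intro!: tendsto_eq_intros)
  have L\<rho>: "(\<rho> \<longlongrightarrow> 1) (at_right 0)" unfolding \<rho>_def using LE LP' P1 by (auto intro!: tendsto_eq_intros)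
  have Ly: "(y \<longlongrightarrow> 1 + d2) (at_right 0)" unfolding y_def using L\<rho> by (auto intro!: tendsto_eq_intros)
  have Lg2: "((\<lambda>\<theta>. E \<theta> * (y \<theta> / (y \<theta> - 1)) / (P' \<theta> - 1)) \<longlongrightarrow> 0) (at_right 0)"
    using LE Ly LP' d2 P1 by (auto intro!: tendsto_eq_intros)
  have ev1: "eventually (\<lambda>\<theta>. 0 < D \<theta>) (at_right 0)" using order_tendstoD(1)[OF LD a0] .
  have ev2: "eventually (\<lambda>\<theta>. s < p \<theta>) (at_right 0)" using order_tendstoD(1)[OF Lp sr] .
  have ev3: "eventually (\<lambda>\<theta>. 1 < x \<theta>) (at_right 0)" using order_tendstoD(1)[OF Lx] d1 by simp
  have ev4: "eventually (\<lambda>\<theta>. E \<theta> * (x \<theta> / (x \<theta> - 1)) * (q/s - 1) < 1) (at_right 0)"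
    using order_tendstoD(2)[OF Lg1] by simp
  have ev5: "eventually (\<lambda>\<theta>. 1 < y \<theta>) (at_right 0)" using order_tendstoD(1)[OF Ly] d2 by simp
  have ev6: "eventually (\<lambda>\<theta>. E \<theta> * (y \<theta> / (y \<theta> - 1)) / (P' \<theta> - 1) < 1) (at_right 0)"
    using order_tendstoD(2)[OF Lg2] by simp
  show ?thesis
    using ev1 ev2 ev3 ev4 ev5 ev6
    by eventually_elim (simp add: D_def E_def p_def x_def P'_def \<rho>_def y_def a_def b_def)
qed

lemma ev_sum:
  fixes r q :: "nat \<Rightarrow> real"
  assumes r: "\<forall>j<m. 0 < r j" and q: "\<forall>j<m. 0 < q j" and S: "(\<Sum>j<m. 1 / r j) < 1"
  shows "eventually (\<lambda>\<theta>. (\<Sum>j<m. 1 / ((1 - \<theta>) / (1 / r j - \<theta> * (1 / q j)))) < 1) (at_right 0)"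
proof -
  have "((\<lambda>\<theta>. \<Sum>j<m. 1 / ((1 - \<theta>) / (1 / r j - \<theta> * (1 / q j)))) \<longlongrightarrow> (\<Sum>j<m. 1 / r j)) (at_right 0)"
  proof (rule tendsto_sum)
    fix j assume "j \<in> {..<m}"
    then have rj: "0 < r j" "0 < q j" using r q by auto
    show "((\<lambda>\<theta>. 1 / ((1 - \<theta>) / (1 / r j - \<theta> * (1 / q j)))) \<longlongrightarrow> 1 / r j) (at_right 0)"
      using rj by (auto intro!: tendsto_eq_intros)
  qed
  from order_tendstoD(2)[OF this S] show ?thesis .
qed

lemma nu_powr:
  assumes "(\<Sum>j<m. 1 / p j) \<noteq> 0"
  shows "nu m f p x powr (c / expo m p) = (\<Prod>j<m. f j x powr (c / p j))"
proof -
  have "nu m f p x powr (c / expo m p) = (\<Prod>j<m. (f j x powr (expo m p / p j)) powr (c / expo m p))"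
    unfolding nu_def by (rule prod_powr_distrib)
  also have "\<dots> = (\<Prod>j<m. f j x powr (c / p j))"
  proof (rule prod.cong[OF refl])
    fix j
    have "expo m p / p j * (c / expo m p) = c / p j"
      using assms by (simp add: expo_def)
    then show "(f j x powr (expo m p / p j)) powr (c / expo m p) = f j x powr (c / p j)"
      by (simp add: powr_powr)
  qed
  finally show ?thesis .
qed

lemma inv_expo: "1 / expo m p = (\<Sum>j<m. 1 / p j)"
  by (simp add: expo_def)

lemma one_lt_div_pred: "1 < (t::real) \<Longrightarrow> 1 < t / (t - 1)"
  by (subst less_divide_eq_1_pos) auto

theorem lemma5p3:
  fixes m :: nat and s q r :: "nat \<Rightarrow> real"
    and v w :: "nat \<Rightarrow> 'a::euclidean_space \<Rightarrow> real"
  assumes "m \<ge> 1"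
    and "\<forall>j<m. 1 \<le> s j"
    and "\<forall>j<m. s j < q j \<and> s j < r j"
    and "(\<Sum>j<m. 1 / q j) < 1"
    and "(\<Sum>j<m. 1 / r j) < 1"
    and "\<forall>j<m. A_weight (q j / s j) (v j)"
    and "\<forall>j<m. A_weight (r j / s j) (w j)"
  shows "\<exists>(p :: nat \<Rightarrow> real) (u :: nat \<Rightarrow> 'a \<Rightarrow> real) (\<theta> :: real).
           (\<forall>j<m. s j < p j) \<and> (\<Sum>j<m. 1 / p j) < 1 \<and>
           (\<forall>j<m. A_weight (p j / s j) (u j)) \<and>
           0 < \<theta> \<and> \<theta> < 1 \<and>
           (\<forall>j<m. 1 / r j = (1 - \<theta>) / p j + \<theta> / q j) \<and>
           (\<forall>j<m. AE x in lebesgue.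
              w j x powr (1 / r j) = u j x powr ((1 - \<theta>) / p j) * v j x powr (\<theta> / q j)) \<and>
           1 / expo m r = (1 - \<theta>) / expo m p + \<theta> / expo m q \<and>
           (AE x in lebesgue.
              nu m w r x powr (1 / expo m r)
              = nu m u p x powr ((1 - \<theta>) / expo m p) * nu m v q x powr (\<theta> / expo m q))"
proof -
  note m1 = assms(1)
  have s0: "0 < s j" if "j < m" for j
  proof -
    have "1 \<le> s j" using assms(2) that by auto
    then show ?thesis by linarith
  qed
  have sq: "s j < q j" and sr: "s j < r j" if "j < m" for j using assms(3) that by auto
  have q0: "0 < q j" and r0: "0 < r j" if "j < m" for j using s0[OF that] sq[OF that] sr[OF that] by linarith+
  have Av: "A_weight (q j / s j) (v j)" and Aw: "A_weight (r j / s j) (w j)" if "j < m" for j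
    using assms(6,7) that by auto
  have P1: "1 < r j / s j" and Q1: "1 < q j / s j" if "j < m" for j
    using s0 sr sq that by auto
  have ex1: "\<forall>j. \<exists>dK::real \<times> real. j < m \<longrightarrow> 0 < fst dK \<and> 0 \<le> snd dK \<and>
      (\<forall>a h. 0 < h \<longrightarrow> (\<integral>\<^sup>+x\<in>cube a h. ennreal (w j x powr (1 + fst dK)) \<partial>lebesgue)
        \<le> ennreal (snd dK * h ^ DIM('a) * avg (cube a h) (w j) powr (1 + fst dK)))"
  proof
    fix j show "\<exists>dK::real \<times> real. j < m \<longrightarrow> 0 < fst dK \<and> 0 \<le> snd dK \<and>
      (\<forall>a h. 0 < h \<longrightarrow> (\<integral>\<^sup>+x\<in>cube a h. ennreal (w j x powr (1 + fst dK)) \<partial>lebesgue)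
        \<le> ennreal (snd dK * h ^ DIM('a) * avg (cube a h) (w j) powr (1 + fst dK)))"
    proof (cases "j < m")
      case True
      obtain d K where "0 < d" "0 \<le> K" "\<And>a h. 0 < h \<Longrightarrow> (\<integral>\<^sup>+x\<in>cube a h. ennreal (w j x powr (1 + d)) \<partial>lebesgue)
        \<le> ennreal (K * h ^ DIM('a) * avg (cube a h) (w j) powr (1 + d))"
        using A_weight_RH[OF Aw[OF True] P1[OF True]] by blast
      then show ?thesis by (intro exI[of _ "(d, K)"]) auto
    qed auto
  qed
  from choice[OF ex1] obtain f1 where f1: "\<forall>j. j < m \<longrightarrow> 0 < fst (f1 j) \<and> 0 \<le> snd (f1 j) \<and>
      (\<forall>a h. 0 < h \<longrightarrow> (\<integral>\<^sup>+x\<in>cube a h. ennreal (w j x powr (1 + fst (f1 j))) \<partial>lebesgue)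
        \<le> ennreal (snd (f1 j) * h ^ DIM('a) * avg (cube a h) (w j) powr (1 + fst (f1 j))))"
    by blast
  have ex2: "\<forall>j. \<exists>dK::real \<times> real. j < m \<longrightarrow> 0 < fst dK \<and> 0 \<le> snd dK \<and>
      (\<forall>a h. 0 < h \<longrightarrow> (\<integral>\<^sup>+x\<in>cube a h. ennreal ((w j x powr (-1/(r j / s j - 1))) powr (1 + fst dK)) \<partial>lebesgue)
        \<le> ennreal (snd dK * h ^ DIM('a) * avg (cube a h) (\<lambda>x. w j x powr (-1/(r j / s j - 1))) powr (1 + fst dK)))"
  proof
    fix j show "\<exists>dK::real \<times> real. j < m \<longrightarrow> 0 < fst dK \<and> 0 \<le> snd dK \<and>
      (\<forall>a h. 0 < h \<longrightarrow> (\<integral>\<^sup>+x\<in>cube a h. ennreal ((w j x powr (-1/(r j / s j - 1))) powr (1 + fst dK)) \<partial>lebesgue)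
        \<le> ennreal (snd dK * h ^ DIM('a) * avg (cube a h) (\<lambda>x. w j x powr (-1/(r j / s j - 1))) powr (1 + fst dK)))"
    proof (cases "j < m")
      case True
      have t1: "1 < (r j / s j) / (r j / s j - 1)" by (rule one_lt_div_pred[OF P1[OF True]])
      obtain d K where "0 < d" "0 \<le> K" "\<And>a h. 0 < h \<Longrightarrow> (\<integral>\<^sup>+x\<in>cube a h. ennreal ((w j x powr (-1/(r j / s j - 1))) powr (1 + d)) \<partial>lebesgue)
        \<le> ennreal (K * h ^ DIM('a) * avg (cube a h) (\<lambda>x. w j x powr (-1/(r j / s j - 1))) powr (1 + d))"
        using A_weight_RH[OF A_weight_dual[OF Aw[OF True] P1[OF True]] t1] by blast
      then show ?thesis by (intro exI[of _ "(d, K)"]) auto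
    qed auto
  qed
  from choice[OF ex2] obtain f2 where f2: "\<forall>j. j < m \<longrightarrow> 0 < fst (f2 j) \<and> 0 \<le> snd (f2 j) \<and>
      (\<forall>a h. 0 < h \<longrightarrow> (\<integral>\<^sup>+x\<in>cube a h. ennreal ((w j x powr (-1/(r j / s j - 1))) powr (1 + fst (f2 j))) \<partial>lebesgue)
        \<le> ennreal (snd (f2 j) * h ^ DIM('a) * avg (cube a h) (\<lambda>x. w j x powr (-1/(r j / s j - 1))) powr (1 + fst (f2 j))))"
    by blast
  define d1 where "d1 j = fst (f1 j)" for j
  define K1 where "K1 j = snd (f1 j)" for j
  define d2 where "d2 j = fst (f2 j)" for j
  define K2 where "K2 j = snd (f2 j)" for j
  have evj: "\<forall>j\<in>{..<m}. eventually (\<lambda>\<theta>.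
     0 < 1/r j - \<theta> * (1/q j) \<and>
     s j < (1 - \<theta>) / (1/r j - \<theta> * (1/q j)) \<and>
     1 < (1 + d1 j) / (1 + \<theta> * (1/q j) / (1/r j - \<theta> * (1/q j))) \<and>
     (\<theta> * (1/q j) / (1/r j - \<theta> * (1/q j))) * (((1 + d1 j) / (1 + \<theta> * (1/q j) / (1/r j - \<theta> * (1/q j))))
        / ((1 + d1 j) / (1 + \<theta> * (1/q j) / (1/r j - \<theta> * (1/q j))) - 1)) * (q j/s j - 1) < 1 \<and>
     1 < (1 + d2 j) / ((1 + \<theta> * (1/q j) / (1/r j - \<theta> * (1/q j))) * (r j/s j - 1) / ((1 - \<theta>) / (1/r j - \<theta> * (1/q j)) / s j - 1)) \<and>
     (\<theta> * (1/q j) / (1/r j - \<theta> * (1/q j))) *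
       (((1 + d2 j) / ((1 + \<theta> * (1/q j) / (1/r j - \<theta> * (1/q j))) * (r j/s j - 1) / ((1 - \<theta>) / (1/r j - \<theta> * (1/q j)) / s j - 1)))
        / ((1 + d2 j) / ((1 + \<theta> * (1/q j) / (1/r j - \<theta> * (1/q j))) * (r j/s j - 1) / ((1 - \<theta>) / (1/r j - \<theta> * (1/q j)) / s j - 1)) - 1))
       / ((1 - \<theta>) / (1/r j - \<theta> * (1/q j)) / s j - 1) < 1) (at_right 0)"
    by (intro ballI ev_j) (use s0 sr sq f1 f2 in \<open>auto simp: d1_def d2_def\<close>)
  have ev1: "eventually (\<lambda>\<theta>. \<theta> < (1::real)) (at_right 0)"
    unfolding eventually_at_right_field by (intro exI[of _ 1]) auto
  have ev2: "eventually (\<lambda>\<theta>. (\<Sum>j<m. 1 / ((1 - \<theta>) / (1 / r j - \<theta> * (1 / q j)))) < 1) (at_right 0)"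
    by (rule ev_sum) (use r0 q0 assms(5) in auto)
  have evall: "eventually (\<lambda>\<theta>. \<theta> < 1 \<and> (\<Sum>j<m. 1 / ((1 - \<theta>) / (1 / r j - \<theta> * (1 / q j)))) < 1 \<and> (\<forall>j\<in>{..<m}.
     0 < 1/r j - \<theta> * (1/q j) \<and>
     s j < (1 - \<theta>) / (1/r j - \<theta> * (1/q j)) \<and>
     1 < (1 + d1 j) / (1 + \<theta> * (1/q j) / (1/r j - \<theta> * (1/q j))) \<and>
     (\<theta> * (1/q j) / (1/r j - \<theta> * (1/q j))) * (((1 + d1 j) / (1 + \<theta> * (1/q j) / (1/r j - \<theta> * (1/q j))))
        / ((1 + d1 j) / (1 + \<theta> * (1/q j) / (1/r j - \<theta> * (1/q j))) - 1)) * (q j/s j - 1) < 1 \<and>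
     1 < (1 + d2 j) / ((1 + \<theta> * (1/q j) / (1/r j - \<theta> * (1/q j))) * (r j/s j - 1) / ((1 - \<theta>) / (1/r j - \<theta> * (1/q j)) / s j - 1)) \<and>
     (\<theta> * (1/q j) / (1/r j - \<theta> * (1/q j))) *
       (((1 + d2 j) / ((1 + \<theta> * (1/q j) / (1/r j - \<theta> * (1/q j))) * (r j/s j - 1) / ((1 - \<theta>) / (1/r j - \<theta> * (1/q j)) / s j - 1)))
        / ((1 + d2 j) / ((1 + \<theta> * (1/q j) / (1/r j - \<theta> * (1/q j))) * (r j/s j - 1) / ((1 - \<theta>) / (1/r j - \<theta> * (1/q j)) / s j - 1)) - 1))
       / ((1 - \<theta>) / (1/r j - \<theta> * (1/q j)) / s j - 1) < 1)) (at_right 0)"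
    by (intro eventually_conj ev1 ev2 eventually_ball_finite[OF _ evj]) simp
  then obtain b where b: "0 < b" and bP: "\<And>y. 0 < y \<Longrightarrow> y < b \<Longrightarrow> y < 1 \<and> (\<Sum>j<m. 1 / ((1 - y) / (1 / r j - y * (1 / q j)))) < 1 \<and> (\<forall>j\<in>{..<m}.
     0 < 1/r j - y * (1/q j) \<and>
     s j < (1 - y) / (1/r j - y * (1/q j)) \<and>
     1 < (1 + d1 j) / (1 + y * (1/q j) / (1/r j - y * (1/q j))) \<and>
     (y * (1/q j) / (1/r j - y * (1/q j))) * (((1 + d1 j) / (1 + y * (1/q j) / (1/r j - y * (1/q j))))
        / ((1 + d1 j) / (1 + y * (1/q j) / (1/r j - y * (1/q j))) - 1)) * (q j/s j - 1) < 1 \<and>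
     1 < (1 + d2 j) / ((1 + y * (1/q j) / (1/r j - y * (1/q j))) * (r j/s j - 1) / ((1 - y) / (1/r j - y * (1/q j)) / s j - 1)) \<and>
     (y * (1/q j) / (1/r j - y * (1/q j))) *
       (((1 + d2 j) / ((1 + y * (1/q j) / (1/r j - y * (1/q j))) * (r j/s j - 1) / ((1 - y) / (1/r j - y * (1/q j)) / s j - 1)))
        / ((1 + d2 j) / ((1 + y * (1/q j) / (1/r j - y * (1/q j))) * (r j/s j - 1) / ((1 - y) / (1/r j - y * (1/q j)) / s j - 1)) - 1))
       / ((1 - y) / (1/r j - y * (1/q j)) / s j - 1) < 1)"
    unfolding eventually_at_right_field by blast
  define \<theta> where "\<theta> = b / 2"
  have \<theta>0: "0 < \<theta>" and \<theta>b: "\<theta> < b" using b by (auto simp: \<theta>_def)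
  note th = bP[OF \<theta>0 \<theta>b]
  have \<theta>1: "\<theta> < 1" using th by blast
  have Ssum: "(\<Sum>j<m. 1 / ((1 - \<theta>) / (1 / r j - \<theta> * (1 / q j)))) < 1" using th by blast
  have thj: "0 < 1/r j - \<theta> * (1/q j) \<and>
     s j < (1 - \<theta>) / (1/r j - \<theta> * (1/q j)) \<and>
     1 < (1 + d1 j) / (1 + \<theta> * (1/q j) / (1/r j - \<theta> * (1/q j))) \<and>
     (\<theta> * (1/q j) / (1/r j - \<theta> * (1/q j))) * (((1 + d1 j) / (1 + \<theta> * (1/q j) / (1/r j - \<theta> * (1/q j))))
        / ((1 + d1 j) / (1 + \<theta> * (1/q j) / (1/r j - \<theta> * (1/q j))) - 1)) * (q j/s j - 1) < 1 \<and>
     1 < (1 + d2 j) / ((1 + \<theta> * (1/q j) / (1/r j - \<theta> * (1/q j))) * (r j/s j - 1) / ((1 - \<theta>) / (1/r j - \<theta> * (1/q j)) / s j - 1)) \<and>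
     (\<theta> * (1/q j) / (1/r j - \<theta> * (1/q j))) *
       (((1 + d2 j) / ((1 + \<theta> * (1/q j) / (1/r j - \<theta> * (1/q j))) * (r j/s j - 1) / ((1 - \<theta>) / (1/r j - \<theta> * (1/q j)) / s j - 1)))
        / ((1 + d2 j) / ((1 + \<theta> * (1/q j) / (1/r j - \<theta> * (1/q j))) * (r j/s j - 1) / ((1 - \<theta>) / (1/r j - \<theta> * (1/q j)) / s j - 1)) - 1))
       / ((1 - \<theta>) / (1/r j - \<theta> * (1/q j)) / s j - 1) < 1" if "j < m" for j
    using th that by blast
  define D where "D j = 1/r j - \<theta> * (1/q j)" for j
  define E where "E j = \<theta> * (1/q j) / D j" for j
  define p where "p j = (1 - \<theta>) / D j" for j
  define u where "u j z = w j z powr (1 + E j) * v j z powr (-E j)" for j z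
  have thj': "0 < D j \<and> s j < p j \<and>
     1 < (1 + d1 j) / (1 + E j) \<and>
     E j * (((1 + d1 j) / (1 + E j)) / ((1 + d1 j) / (1 + E j) - 1)) * (q j/s j - 1) < 1 \<and>
     1 < (1 + d2 j) / ((1 + E j) * (r j/s j - 1) / (p j / s j - 1)) \<and>
     E j * (((1 + d2 j) / ((1 + E j) * (r j/s j - 1) / (p j / s j - 1)))
        / ((1 + d2 j) / ((1 + E j) * (r j/s j - 1) / (p j / s j - 1)) - 1))
       / (p j / s j - 1) < 1" if j: "j < m" for j
    using thj[OF j] unfolding D_def[symmetric] E_def[symmetric] p_def[symmetric] .
  have Dpos: "0 < D j" and sp: "s j < p j" if "j < m" for j using thj'[OF that] by auto
  have Epos: "0 < E j" if j: "j < m" for j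
    using Dpos[OF j] q0[OF j] \<theta>0 by (simp add: E_def)
  have ppos: "0 < p j" if j: "j < m" for j using sp[OF j] s0[OF j] by linarith
  have Sp: "(\<Sum>j<m. 1 / p j) < 1" using Ssum by (simp add: p_def D_def)
  have Au: "A_weight (p j / s j) (u j)" if j: "j < m" for j
  proof -
    define x where "x = (1 + d1 j) / (1 + E j)"
    define \<gamma>1 where "\<gamma>1 = E j * (x / (x - 1)) * (q j / s j - 1)"
    define \<rho> where "\<rho> = (1 + E j) * (r j / s j - 1) / (p j / s j - 1)"
    define y where "y = (1 + d2 j) / \<rho>"
    define \<gamma>2 where "\<gamma>2 = E j * (y / (y - 1)) / (p j / s j - 1)"
    have T: "1 < x" "\<gamma>1 < 1" "1 < y" "\<gamma>2 < 1"
      using thj'[OF j] unfolding x_def \<gamma>1_def \<rho>_def y_def \<gamma>2_def by auto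
    have P'1: "1 < p j / s j" using sp[OF j] s0[OF j] by simp
    have g1pos: "0 < \<gamma>1" using Epos[OF j] T(1) Q1[OF j] unfolding \<gamma>1_def by simp
    have g2pos: "0 < \<gamma>2" using Epos[OF j] T(3) P'1 unfolding \<gamma>2_def by simp
    have "A_weight (p j / s j) (\<lambda>z. w j z powr (1 + E j) * v j z powr (-E j))"
    proof (rule comb[OF Aw[OF j] P1[OF j] Av[OF j] Q1[OF j] _ _ _ _ _ _ Epos[OF j] P'1 T(1) x_def g1pos T(2) \<gamma>1_def \<rho>_def T(3) y_def g2pos T(4) \<gamma>2_def])
      show "0 < d1 j" "0 \<le> K1 j" using f1 j by (auto simp: d1_def K1_def)
      show "0 < d2 j" "0 \<le> K2 j" using f2 j by (auto simp: d2_def K2_def)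
      show "\<And>a h. 0 < h \<Longrightarrow> (\<integral>\<^sup>+x\<in>cube a h. ennreal (w j x powr (1 + d1 j)) \<partial>lebesgue)
        \<le> ennreal (K1 j * h ^ DIM('a) * avg (cube a h) (w j) powr (1 + d1 j))"
        using f1 j by (auto simp: d1_def K1_def)
      show "\<And>a h. 0 < h \<Longrightarrow> (\<integral>\<^sup>+x\<in>cube a h. ennreal ((w j x powr (-1/(r j / s j - 1))) powr (1 + d2 j)) \<partial>lebesgue)
        \<le> ennreal (K2 j * h ^ DIM('a) * avg (cube a h) (\<lambda>x. w j x powr (-1/(r j / s j - 1))) powr (1 + d2 j))"
        using f2 j by (auto simp: d2_def K2_def)
    qed
    moreover have "u j = (\<lambda>z. w j z powr (1 + E j) * v j z powr (-E j))" by (simp add: u_def fun_eq_iff)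
    ultimately show ?thesis by simp
  qed
  have cp: "(1 - \<theta>) / p j = D j" if j: "j < m" for j
    using Dpos[OF j] \<theta>1 by (simp add: p_def)
  have ex_r: "1 / r j = (1 - \<theta>) / p j + \<theta> / q j" if j: "j < m" for j
    using cp[OF j] by (simp add: D_def)
  have AEj: "AE x in lebesgue. w j x powr (1 / r j) = u j x powr ((1 - \<theta>) / p j) * v j x powr (\<theta> / q j)"
    if j: "j < m" for j
    using A_weightD(3)[OF Aw[OF j]] A_weightD(3)[OF Av[OF j]]
  proof eventually_elim
    case (elim x)
    have ED: "E j * D j = \<theta> / q j" using Dpos[OF j] by (simp add: E_def)
    have e1: "(1 + E j) * D j = 1 / r j" by (simp add: distrib_right ED) (simp add: D_def)
    have e2: "- E j * D j = - (\<theta> / q j)" using ED by simp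
    have "u j x powr ((1 - \<theta>) / p j) = w j x powr (1 / r j) * v j x powr (- (\<theta> / q j))"
      unfolding cp[OF j] u_def powr_mult powr_powr e1 e2 ..
    moreover have "v j x powr (- (\<theta> / q j)) * v j x powr (\<theta> / q j) = 1"
      using elim(2) by (simp add: powr_add[symmetric])
    ultimately show ?case by (simp add: mult.assoc)
  qed
  have ne: "{..<m} \<noteq> {}" using m1 by (auto simp: lessThan_empty_iff)
  have Sr: "(\<Sum>j<m. 1 / r j) \<noteq> 0"
  proof -
    have "0 < (\<Sum>j<m. 1 / r j)" using ne r0 by (intro sum_pos) auto
    then show ?thesis by simp
  qed
  have Spn: "(\<Sum>j<m. 1 / p j) \<noteq> 0"
  proof -
    have "0 < (\<Sum>j<m. 1 / p j)" using ne ppos by (intro sum_pos) auto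
    then show ?thesis by simp
  qed
  have Sq: "(\<Sum>j<m. 1 / q j) \<noteq> 0"
  proof -
    have "0 < (\<Sum>j<m. 1 / q j)" using ne q0 by (intro sum_pos) auto
    then show ?thesis by simp
  qed
  have expo_id: "1 / expo m r = (1 - \<theta>) / expo m p + \<theta> / expo m q"
  proof -
    have "1 / expo m r = (\<Sum>j<m. (1 - \<theta>) * (1 / p j) + \<theta> * (1 / q j))"
      unfolding inv_expo using ex_r by (intro sum.cong) auto
    also have "\<dots> = (1 - \<theta>) * (\<Sum>j<m. 1 / p j) + \<theta> * (\<Sum>j<m. 1 / q j)"
      by (simp add: sum.distrib sum_distrib_left)
    finally show ?thesis by (simp add: expo_def)
  qed
  have nu_id: "AE x in lebesgue.
              nu m w r x powr (1 / expo m r)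
              = nu m u p x powr ((1 - \<theta>) / expo m p) * nu m v q x powr (\<theta> / expo m q)"
  proof -
    have "AE x in lebesgue. \<forall>j\<in>{..<m}. w j x powr (1 / r j) = u j x powr ((1 - \<theta>) / p j) * v j x powr (\<theta> / q j)"
      by (rule AE_finite_allI) (use AEj in auto)
    then show ?thesis
    proof eventually_elim
      case (elim x)
      have "nu m w r x powr (1 / expo m r) = (\<Prod>j<m. w j x powr (1 / r j))" by (rule nu_powr[OF Sr])
      also have "\<dots> = (\<Prod>j<m. u j x powr ((1 - \<theta>) / p j) * v j x powr (\<theta> / q j))"
        using elim by (intro prod.cong) auto
      also have "\<dots> = (\<Prod>j<m. u j x powr ((1 - \<theta>) / p j)) * (\<Prod>j<m. v j x powr (\<theta> / q j))"
        by (rule prod.distrib)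
      also have "(\<Prod>j<m. u j x powr ((1 - \<theta>) / p j)) = nu m u p x powr ((1 - \<theta>) / expo m p)"
        by (rule nu_powr[OF Spn, symmetric])
      also have "(\<Prod>j<m. v j x powr (\<theta> / q j)) = nu m v q x powr (\<theta> / expo m q)"
        by (rule nu_powr[OF Sq, symmetric])
      finally show ?case .
    qed
  qed
  show ?thesis
    by (rule exI[of _ p], rule exI[of _ u], rule exI[of _ \<theta>])
       (use sp Sp Au \<theta>0 \<theta>1 ex_r AEj expo_id nu_id in blast)
qed

end
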